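(* Let $q\ge 2$ and $m\ge 1$ be fixed integers. Then, as $n\to\infty$, the number of partitions of the hypercube ${\bf Z}_q^n$ into subcubes each of dimension at least $n-m$ (the dimensions of different subcubes of a partition may differ) is asymptotically equal to $n^{\frac{q^m-1}{q-1}}$.
   Context: A $d$-dimensional subcube of ${\bf Z}_q^n$ is a subset obtained by fixing the values of some $n-d$ coordinates and letting each remaining coordinate run through all of ${\bf Z}_q$. A partition into subcubes is an (unordered) collection of subcubes such that each vector of ${\bf Z}_q^n$ lies in exactly one of them. *)

theory Defs
  imports "HOL-Library.FuncSet" "HOL-Library.Landau_Symbols"
begin

definition hcube :: "nat \<Rightarrow> nat \<Rightarrow> (nat \<Rightarrow> nat) set" where
  "hcube q n = ({..<n} \<rightarrow>\<^sub>E {..<q})"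

definition subcube_fix :: "nat \<Rightarrow> nat \<Rightarrow> nat set \<Rightarrow> (nat \<Rightarrow> nat) \<Rightarrow> (nat \<Rightarrow> nat) set" where
  "subcube_fix q n S f = {x \<in> hcube q n. \<forall>i\<in>S. x i = f i}"

definition subcube_dim_ge :: "nat \<Rightarrow> nat \<Rightarrow> nat \<Rightarrow> (nat \<Rightarrow> nat) set \<Rightarrow> bool" where
  "subcube_dim_ge q n d C \<longleftrightarrow>
     (\<exists>S f. S \<subseteq> {..<n} \<and> (\<forall>i\<in>S. f i < q) \<and> n - card S \<ge> d \<and> C = subcube_fix q n S f)"

definition subcube_partition :: "nat \<Rightarrow> nat \<Rightarrow> nat \<Rightarrow> (nat \<Rightarrow> nat) set set \<Rightarrow> bool" where
  "subcube_partition q n d P \<longleftrightarrow>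
     (\<forall>C\<in>P. subcube_dim_ge q n d C) \<and>
     (\<forall>x\<in>hcube q n. \<exists>!C\<in>P. x \<in> C)"

end

theory Submission
  imports Defs
begin


definition agrees :: "(nat \<Rightarrow> nat) \<Rightarrow> (nat \<Rightarrow> nat option) \<Rightarrow> bool" where
  "agrees x c \<longleftrightarrow> (\<forall>i\<in>dom c. c i = Some (x i))"
definition hc :: "nat \<Rightarrow> nat set \<Rightarrow> (nat \<Rightarrow> nat) set" where
  "hc q I = I \<rightarrow>\<^sub>E {..<q}"
definition vcode :: "nat \<Rightarrow> nat set \<Rightarrow> (nat \<Rightarrow> nat option) \<Rightarrow> bool" where
  "vcode q I c \<longleftrightarrow> dom c \<subseteq> I \<and> (\<forall>i\<in>dom c. the (c i) < q)"
definition cpart :: "nat \<Rightarrow> nat set \<Rightarrow> (nat \<Rightarrow> nat option) set \<Rightarrow> bool" where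
  "cpart q I P \<longleftrightarrow> (\<forall>c\<in>P. vcode q I c) \<and> (\<forall>x\<in>hc q I. \<exists>!c\<in>P. agrees x c)"
definition UU :: "(nat \<Rightarrow> nat option) set \<Rightarrow> nat set" where
  "UU P = (\<Union>c\<in>P. dom c)"
definition sl :: "nat \<Rightarrow> nat \<Rightarrow> (nat \<Rightarrow> nat option) set \<Rightarrow> (nat \<Rightarrow> nat option) set" where
  "sl t a P = (\<lambda>c. c(t:=None)) ` {c\<in>P. c t = None \<or> c t = Some a}"

definition pt :: "(nat \<Rightarrow> nat option) \<Rightarrow> nat set \<Rightarrow> nat \<Rightarrow> nat" where
  "pt c I = (\<lambda>i. if i \<in> I then (case c i of Some v \<Rightarrow> v | None \<Rightarrow> 0) else undefined)"

lemma pt_hc: "vcode q I c \<Longrightarrow> q \<ge> 1 \<Longrightarrow> pt c I \<in> hc q I"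
proof -
  assume v: "vcode q I c" and q: "q \<ge> 1"
  have "\<And>i. i \<in> I \<Longrightarrow> pt c I i < q"
  proof -
    fix i assume i: "i \<in> I"
    show "pt c I i < q"
    proof (cases "c i")
      case None then show ?thesis using i q by (simp add: pt_def)
    next
      case (Some v') then have "i \<in> dom c" by auto
      then have "the (c i) < q" using v unfolding vcode_def by blast
      then show ?thesis using Some i unfolding pt_def by auto
    qed
  qed
  moreover have "\<And>i. i \<notin> I \<Longrightarrow> pt c I i = undefined" by (simp add: pt_def)
  ultimately show ?thesis unfolding hc_def by (auto simp: PiE_def extensional_def)
qed

lemma pt_agrees: "vcode q I c \<Longrightarrow> agrees (pt c I) c"
  unfolding pt_def agrees_def vcode_def by auto

lemma agrees_val: "agrees y c \<Longrightarrow> c t = Some w \<Longrightarrow> w = y t"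
  unfolding agrees_def by (metis domI option.inject)

lemma exists_agree: "vcode q I c \<Longrightarrow> q \<ge> 1 \<Longrightarrow> \<exists>x\<in>hc q I. agrees x c"
  using pt_hc pt_agrees by blast

lemma cpart_vcode: "cpart q I P \<Longrightarrow> c \<in> P \<Longrightarrow> vcode q I c"
  unfolding cpart_def by blast

lemma cpart_uniq: "cpart q I P \<Longrightarrow> x \<in> hc q I \<Longrightarrow> c \<in> P \<Longrightarrow> d \<in> P \<Longrightarrow> agrees x c \<Longrightarrow> agrees x d \<Longrightarrow> c = d"
  unfolding cpart_def by blast

lemma cpart_ex: "cpart q I P \<Longrightarrow> x \<in> hc q I \<Longrightarrow> \<exists>c\<in>P. agrees x c"
  unfolding cpart_def by blast

lemma hc_upd: "x \<in> hc q I \<Longrightarrow> b < q \<Longrightarrow> t \<in> I \<Longrightarrow> x(t:=b) \<in> hc q I"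
  unfolding hc_def by (auto simp: PiE_def extensional_def)

lemma agrees_upd_free: "agrees x c \<Longrightarrow> c t = None \<Longrightarrow> agrees (x(t:=b)) c"
  unfolding agrees_def by (auto simp: domIff)

lemma agrees_upd_free2: "agrees (x(t:=b)) c \<Longrightarrow> c t = None \<Longrightarrow> agrees x c"
  unfolding agrees_def by (auto simp: domIff)

lemma used_all_values:
  assumes P: "cpart q I P" and c: "c \<in> P" "c t = Some v" and b: "b < q"
  shows "\<exists>d\<in>P. d t = Some b"
proof -
  have vc: "vcode q I c" using P c cpart_vcode by blast
  have tI: "t \<in> I" using vc c unfolding vcode_def by auto
  have q1: "q \<ge> 1" using b by auto
  obtain x where x: "x \<in> hc q I" "agrees x c" using exists_agree[OF vc q1] by blast
  have x': "x(t:=b) \<in> hc q I" using hc_upd[OF x(1) b tI] .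
  obtain d where d: "d \<in> P" "agrees (x(t:=b)) d" using cpart_ex[OF P x'] by blast
  show ?thesis
  proof (cases "d t")
    case None
    then have "agrees x d" using agrees_upd_free2 d by blast
    then have "d = c" using cpart_uniq[OF P x(1) d(1) c(1)] x by blast
    then show ?thesis using None c by simp
  next
    case (Some w)
    then have "w = b" using agrees_val[OF d(2) Some] by simp
    then show ?thesis using d Some by blast
  qed
qed

lemma slice_cpart:
  assumes P: "cpart q I P" and tI: "t \<in> I" and a: "a < q"
  shows "cpart q (I - {t}) (sl t a P)"
  unfolding cpart_def
proof (intro conjI ballI)
  fix c assume "c \<in> sl t a P"
  then obtain c0 where "c0 \<in> P" "c = c0(t:=None)" unfolding sl_def by auto
  then show "vcode q (I - {t}) c" using cpart_vcode[OF P] unfolding vcode_def by auto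
next
  fix x assume x: "x \<in> hc q (I - {t})"
  have x': "x(t:=a) \<in> hc q I" using x a tI unfolding hc_def by (auto simp: PiE_def extensional_def)
  obtain c where c: "c \<in> P" "agrees (x(t:=a)) c" using cpart_ex[OF P x'] by blast
  have ct: "c t = None \<or> c t = Some a" using agrees_val[OF c(2), of t] by (cases "c t") auto
  have ex: "c(t:=None) \<in> sl t a P" using c ct unfolding sl_def by auto
  have ag: "agrees x (c(t:=None))" using c(2) unfolding agrees_def by auto
  show "\<exists>!c\<in>sl t a P. agrees x c"
  proof (rule ex1I[of _ "c(t:=None)"])
    show "c(t:=None) \<in> sl t a P \<and> agrees x (c(t:=None))" using ex ag by blast
  next
    fix d assume d: "d \<in> sl t a P \<and> agrees x d"
    then obtain d0 where d0: "d0 \<in> P" "d = d0(t:=None)" "d0 t = None \<or> d0 t = Some a" unfolding sl_def by auto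
    have "agrees (x(t:=a)) d0" unfolding agrees_def
    proof
      fix i assume i: "i \<in> dom d0"
      show "d0 i = Some ((x(t:=a)) i)"
      proof (cases "i = t")
        case True then show ?thesis using d0(3) i by auto
      next
        case False
        then have "i \<in> dom d" using i d0(2) by auto
        then have "d i = Some (x i)" using d unfolding agrees_def by blast
        then show ?thesis using False d0(2) by simp
      qed
    qed
    then have "d0 = c" using cpart_uniq[OF P x' d0(1) c(1)] c by blast
    then show "d = c(t:=None)" using d0 by simp
  qed
qed

lemma agrees_mono: "agrees x c \<Longrightarrow> d \<subseteq>\<^sub>m c \<Longrightarrow> agrees x d"
  unfolding agrees_def map_le_def by (metis domI domIff)

lemma cpart_ne: "cpart q I P \<Longrightarrow> q \<ge> 1 \<Longrightarrow> P \<noteq> {}"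
proof -
  assume P: "cpart q I P" and q: "q \<ge> 1"
  have "vcode q I Map.empty" unfolding vcode_def by simp
  then obtain x where "x \<in> hc q I" using exists_agree q by blast
  then show ?thesis using cpart_ex[OF P] by blast
qed

lemma del_notin:
  assumes P: "cpart q I P" and c: "c \<in> P" "c t \<noteq> None" and q: "q \<ge> 1"
  shows "c(t:=None) \<notin> P"
proof
  assume d: "c(t:=None) \<in> P"
  have vc: "vcode q I c" using P c cpart_vcode by blast
  obtain x where x: "x \<in> hc q I" "agrees x c" using exists_agree[OF vc q] by blast
  have "agrees x (c(t:=None))" using agrees_mono[OF x(2)] unfolding map_le_def by auto
  then have "c(t:=None) = c" using cpart_uniq[OF P x(1) d c(1)] x by blast
  then show False using c(2) by (metis fun_upd_same)
qed

lemma L_sub: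
  assumes vc: "vcode q I c" and vd: "vcode q I d" and q: "q \<ge> 2"
    and sub: "\<forall>x\<in>hc q I. agrees x c \<longrightarrow> agrees x d"
  shows "d \<subseteq>\<^sub>m c"
  unfolding map_le_def
proof
  fix i assume i: "i \<in> dom d"
  have iI: "i \<in> I" using vd i unfolding vcode_def by auto
  have x: "pt c I \<in> hc q I" "agrees (pt c I) c" using pt_hc[OF vc] pt_agrees[OF vc] q by auto
  show "d i = c i"
  proof (cases "c i")
    case None
    obtain v where v: "d i = Some v" using i by auto
    define b where "b = (if v = 0 then 1 else 0::nat)"
    have b: "b < q" "b \<noteq> v" using q unfolding b_def by auto
    have "(pt c I)(i:=b) \<in> hc q I" using hc_upd[OF x(1) b(1) iI] .
    moreover have "agrees ((pt c I)(i:=b)) c" using agrees_upd_free[OF x(2) None] .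
    ultimately have "agrees ((pt c I)(i:=b)) d" using sub by blast
    then have "v = b" using agrees_val v by fastforce
    then show ?thesis using b by simp
  next
    case (Some w)
    have "agrees (pt c I) d" using sub x by blast
    then show ?thesis using Some i agrees_val x(2) unfolding agrees_def by (metis domI)
  qed
qed

definition vcodes :: "nat \<Rightarrow> nat set \<Rightarrow> (nat \<Rightarrow> nat option) set" where
  "vcodes q I = {c. vcode q I c}"

lemma vcodes_inj: "inj_on (\<lambda>c. restrict c I) (vcodes q I)"
proof (rule inj_onI)
  fix c d assume c: "c \<in> vcodes q I" and d: "d \<in> vcodes q I" and e: "restrict c I = restrict d I"
  show "c = d"
  proof
    fix i show "c i = d i"
    proof (cases "i \<in> I")
      case True then show ?thesis using e by (metis restrict_apply')
    next
      case False then have "i \<notin> dom c" "i \<notin> dom d" using c d unfolding vcodes_def vcode_def by auto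
      then show ?thesis by (simp add: domIff)
    qed
  qed
qed

lemma vcodes_img: "(\<lambda>c. restrict c I) ` vcodes q I \<subseteq> I \<rightarrow>\<^sub>E insert None (Some ` {..<q})"
proof
  fix y assume "y \<in> (\<lambda>c. restrict c I) ` vcodes q I"
  then obtain c where c: "vcode q I c" "y = restrict c I" unfolding vcodes_def by auto
  have "\<And>i. i \<in> I \<Longrightarrow> c i \<in> insert None (Some ` {..<q})"
  proof -
    fix i assume "i \<in> I"
    show "c i \<in> insert None (Some ` {..<q})"
    proof (cases "c i")
      case (Some v) then have "the (c i) < q" using c(1) unfolding vcode_def by blast
      then show ?thesis using Some by auto
    qed simp
  qed
  then show "y \<in> I \<rightarrow>\<^sub>E insert None (Some ` {..<q})" using c(2) by auto
qed

lemma vcodes_finite: "finite I \<Longrightarrow> finite (vcodes q I)"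
proof -
  assume fI: "finite I"
  have "finite (I \<rightarrow>\<^sub>E insert None (Some ` {..<q}))" using fI by (simp add: finite_PiE)
  then have "finite ((\<lambda>c. restrict c I) ` vcodes q I)" using vcodes_img finite_subset by blast
  then show ?thesis using finite_imageD vcodes_inj by blast
qed

lemma vcodes_card: "finite I \<Longrightarrow> card (vcodes q I) \<le> (q+1) ^ card I"
proof -
  assume fI: "finite I"
  have "card (vcodes q I) = card ((\<lambda>c. restrict c I) ` vcodes q I)"
    using vcodes_inj card_image by metis
  also have "\<dots> \<le> card (I \<rightarrow>\<^sub>E insert None (Some ` {..<q}))"
    using vcodes_img fI by (intro card_mono) (simp_all add: finite_PiE)
  also have "\<dots> = (q+1) ^ card I"
    using fI by (simp add: card_PiE card_image)
  finally show ?thesis .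
qed

lemma cpart_sub_vcodes: "cpart q I P \<Longrightarrow> P \<subseteq> vcodes q I"
  unfolding cpart_def vcodes_def by auto

lemma cpart_finite: "finite I \<Longrightarrow> cpart q I P \<Longrightarrow> finite P"
  by (meson cpart_sub_vcodes vcodes_finite finite_subset)

lemma UU_Un: "UU (A \<union> B) = UU A \<union> UU B" unfolding UU_def by auto

lemma UU_del: "UU ((\<lambda>c. c(t:=None)) ` A) = UU A - {t}" unfolding UU_def by auto



lemma sum_ge_union_plus:
  fixes Y :: "nat \<Rightarrow> nat set"
  assumes fin: "\<And>a. a < q \<Longrightarrow> finite (Y a)" and Z: "\<And>a. a < q \<Longrightarrow> Z \<subseteq> Y a" and q: "q \<ge> 1"
  shows "card (\<Union>a<q. Y a) + (q - 1) * card Z \<le> (\<Sum>a<q. card (Y a))"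
proof -
  have fZ: "finite Z" using fin Z q by (meson finite_subset lessThan_iff zero_less_one less_le_trans)
  have "(\<Sum>a<q. card (Y a)) = (\<Sum>a<q. card Z + card (Y a - Z))"
    by (rule sum.cong) (auto simp: card_Diff_subset fin Z card_mono fZ)
  also have "\<dots> = q * card Z + (\<Sum>a<q. card (Y a - Z))" by (simp add: sum.distrib)
  finally have e: "(\<Sum>a<q. card (Y a)) = q * card Z + (\<Sum>a<q. card (Y a - Z))" .
  have cu: "card (\<Union>a<q. Y a - Z) \<le> (\<Sum>a<q. card (Y a - Z))" by (rule card_UN_le) simp
  have "(\<Union>a<q. Y a) \<subseteq> Z \<union> (\<Union>a<q. Y a - Z)" by auto
  moreover have "finite (Z \<union> (\<Union>a<q. Y a - Z))" using fZ fin by auto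
  ultimately have "card (\<Union>a<q. Y a) \<le> card Z + card (\<Union>a<q. Y a - Z)"
    using card_mono card_Un_le order_trans by metis
  moreover have "(q - 1) * card Z + card Z = q * card Z" using q by (cases q) auto
  ultimately show ?thesis using e cu by linarith
qed

definition Gprop :: "nat \<Rightarrow> nat set \<Rightarrow> (nat \<Rightarrow> nat option) set \<Rightarrow> (nat \<Rightarrow> nat option) set \<Rightarrow> bool" where
  "Gprop q I F Q \<longleftrightarrow> (finite I \<and> cpart q I (F \<union> Q) \<and> F \<inter> Q = {} \<and> Q \<noteq> {} \<longrightarrow>
      1 + (q - 1) * card (UU Q - UU F) \<le> card Q)"

lemma del_inj: "inj_on (\<lambda>c::nat \<Rightarrow> nat option. c(t:=None)) {c. c t = Some a}"
proof (rule inj_onI)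
  fix c d :: "nat \<Rightarrow> nat option"
  assume c: "c \<in> {c. c t = Some a}" and d: "d \<in> {c. c t = Some a}" and e: "c(t:=None) = d(t:=None)"
  show "c = d"
  proof
    fix i show "c i = d i" using c d e by (cases "i = t") (auto dest: fun_cong[of _ _ i])
  qed
qed

lemma routes:
  fixes q :: nat and I :: "nat set" and F Q :: "(nat \<Rightarrow> nat option) set" and t :: nat
  defines "G \<equiv> {c\<in>Q. c t = None}" and "B \<equiv> \<lambda>a. {c\<in>Q. c t = Some a}"
    and "Z \<equiv> UU {c\<in>Q. c t = None} - UU F"
    and "X \<equiv> \<lambda>a. UU {c\<in>Q. c t = Some a} - {t} - UU F - UU {c\<in>Q. c t = None}"
    and "Y \<equiv> \<lambda>a. (UU {c\<in>Q. c t = None} \<union> (UU {c\<in>Q. c t = Some a} - {t})) - UU F"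
  assumes q: "q \<ge> 2" and fI: "finite I" and P: "cpart q I (F \<union> Q)" and FQ: "F \<inter> Q = {}"
    and tQ: "t \<in> UU Q" and tF: "t \<notin> UU F"
    and IH: "\<And>I' F' Q'. card Q' < card Q \<Longrightarrow> Gprop q I' F' Q'"
  shows "card Q = card G + (\<Sum>a<q. card (B a))"
    and "\<forall>a<q. B a \<noteq> {}"
    and "\<forall>a<q. 1 + (q - 1) * card (X a) \<le> card (B a)"
    and "\<forall>a<q. 1 + (q - 1) * card (Y a) \<le> card G + card (B a)"
    and "UU Q - UU F = insert t (Z \<union> (\<Union>a<q. X a))"
    and "UU Q - UU F = insert t (\<Union>a<q. Y a)"
    and "\<forall>a<q. Z \<subseteq> Y a"
    and "finite Z" and "\<forall>a<q. finite (X a)" and "\<forall>a<q. finite (Y a)"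
    and "\<forall>a<q. sl t a (F \<union> Q) = F \<union> G \<union> (\<lambda>c. c(t:=None)) ` B a"
    and "\<forall>a<q. (F \<union> G) \<inter> (\<lambda>c. c(t:=None)) ` B a = {}"
    and "t \<in> I"
    and "\<forall>a<q. card ((\<lambda>c. c(t:=None)) ` B a) = card (B a)"
    and "\<forall>a<q. UU ((\<lambda>c. c(t:=None)) ` B a) - UU (F \<union> G) = X a"
proof -
  have Zd: "Z = UU G - UU F" unfolding Z_def G_def by simp
  have Xd: "X = (\<lambda>a. UU (B a) - {t} - UU F - UU G)" unfolding X_def G_def B_def by simp
  have Yd: "Y = (\<lambda>a. (UU G \<union> (UU (B a) - {t})) - UU F)" unfolding Y_def G_def B_def by simp
  have fP: "finite (F \<union> Q)" using cpart_finite[OF fI P] .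
  then have fQ: "finite Q" and fF: "finite F" by auto
  have vc: "\<And>c. c \<in> F \<union> Q \<Longrightarrow> vcode q I c" using P cpart_vcode by blast
  have fUU: "\<And>A. A \<subseteq> F \<union> Q \<Longrightarrow> finite (UU A)"
  proof -
    fix A assume A: "A \<subseteq> F \<union> Q"
    have "UU A \<subseteq> I" using vc A unfolding UU_def vcode_def by blast
    then show "finite (UU A)" using fI finite_subset by blast
  qed
  have Fnone: "\<And>c. c \<in> F \<Longrightarrow> c t = None" using tF unfolding UU_def by auto
  obtain c0 where c0: "c0 \<in> Q" "t \<in> dom c0" using tQ unfolding UU_def by auto
  then show tI: "t \<in> I" using vc unfolding vcode_def by auto
  have Bne: "\<forall>a<q. B a \<noteq> {}"
  proof (intro allI impI)
    fix a assume a: "a < q"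
    obtain v where v: "c0 t = Some v" using c0 by auto
    obtain d where d: "d \<in> F \<union> Q" "d t = Some a" using used_all_values[of q I "F \<union> Q" c0 t v a] P v a c0 by blast
    then have "d \<in> Q" using Fnone by fastforce
    then show "B a \<noteq> {}" using d unfolding B_def by auto
  qed
  then show "\<forall>a<q. B a \<noteq> {}" .
  have Qdec: "Q = G \<union> (\<Union>a<q. B a)"
  proof
    show "Q \<subseteq> G \<union> (\<Union>a<q. B a)"
    proof
      fix c assume c: "c \<in> Q"
      show "c \<in> G \<union> (\<Union>a<q. B a)"
      proof (cases "c t")
        case None then show ?thesis using c unfolding G_def by auto
      next
        case (Some v)
        then have "t \<in> dom c" by auto
        then have "the (c t) < q" using vc c unfolding vcode_def by blast
        then show ?thesis using Some c unfolding B_def by auto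
      qed
    qed
  qed (auto simp: G_def B_def)
  have fB: "\<And>a. finite (B a)" using fQ unfolding B_def by auto
  have fG: "finite G" using fQ unfolding G_def by auto
  have cQ: "card Q = card G + (\<Sum>a<q. card (B a))"
  proof -
    have dj: "G \<inter> (\<Union>a<q. B a) = {}" unfolding G_def B_def by auto
    have "card Q = card G + card (\<Union>a<q. B a)"
      by (subst Qdec, rule card_Un_disjoint) (use fG fB dj in auto)
    moreover have "card (\<Union>a<q. B a) = (\<Sum>a<q. card (B a))"
      by (rule card_UN_disjoint) (use fB in auto, auto simp: B_def)
    ultimately show ?thesis by simp
  qed
  then show "card Q = card G + (\<Sum>a<q. card (B a))" .
  define del where "del = (\<lambda>c::nat \<Rightarrow> nat option. c(t:=None))"
  have slq: "\<forall>a<q. sl t a (F \<union> Q) = F \<union> G \<union> del ` B a"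
  proof (intro allI impI)
    fix a assume a: "a < q"
    have "{c \<in> F \<union> Q. c t = None \<or> c t = Some a} = F \<union> G \<union> B a"
      using Fnone unfolding G_def B_def by auto
    moreover have "del ` (F \<union> G) = F \<union> G"
    proof -
      have "\<And>c. c \<in> F \<union> G \<Longrightarrow> del c = c" using Fnone unfolding del_def G_def by (auto simp: fun_upd_idem)
      then show ?thesis by force
    qed
    ultimately show "sl t a (F \<union> Q) = F \<union> G \<union> del ` B a" unfolding sl_def del_def[symmetric]
      by (metis image_Un)
  qed
  then show "\<forall>a<q. sl t a (F \<union> Q) = F \<union> G \<union> (\<lambda>c. c(t:=None)) ` B a" unfolding del_def .
  have disj: "\<forall>a<q. (F \<union> G) \<inter> del ` B a = {}"
  proof (intro allI impI)
    fix a assume a: "a < q"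
    show "(F \<union> G) \<inter> del ` B a = {}"
    proof (rule ccontr)
      assume "(F \<union> G) \<inter> del ` B a \<noteq> {}"
      then obtain c where c: "c \<in> B a" "del c \<in> F \<union> G" by auto
      have "c \<in> F \<union> Q" "c t \<noteq> None" using c unfolding B_def by auto
      moreover have "del c \<in> F \<union> Q" using c(2) unfolding G_def by auto
      ultimately show False using del_notin[OF P] q unfolding del_def by fastforce
    qed
  qed
  then show "\<forall>a<q. (F \<union> G) \<inter> (\<lambda>c. c(t:=None)) ` B a = {}" unfolding del_def .
  have cdel: "\<And>a. card (del ` B a) = card (B a)"
  proof -
    fix a
    have "inj_on del (B a)" unfolding del_def
      by (rule inj_on_subset[OF del_inj[of t a]]) (auto simp: B_def)
    then show "card (del ` B a) = card (B a)" by (rule card_image)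
  qed
  have other: "\<And>a. a < q \<Longrightarrow> \<exists>b<q. b \<noteq> a"
  proof -
    fix a assume "a < q"
    show "\<exists>b<q. b \<noteq> a" by (rule exI[of _ "if a = 0 then 1 else 0"]) (use q in auto)
  qed
  have cBlt: "\<And>a. a < q \<Longrightarrow> card G + card (B a) < card Q"
  proof -
    fix a assume a: "a < q"
    obtain b where b: "b < q" "b \<noteq> a" using other[OF a] by blast
    have "card (B a) + card (B b) = (\<Sum>x\<in>{a,b}. card (B x))" using b by simp
    also have "\<dots> \<le> (\<Sum>x<q. card (B x))" using a b by (intro sum_mono2) auto
    finally have "card (B a) + card (B b) \<le> (\<Sum>x<q. card (B x))" .
    moreover have "card (B b) > 0" using Bne b fB by (simp add: card_gt_0_iff)
    ultimately show "card G + card (B a) < card Q" using cQ by linarith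
  qed
  have UUdel: "\<And>a. UU (del ` B a) = UU (B a) - {t}" unfolding del_def by (rule UU_del)
  show "\<forall>a<q. card ((\<lambda>c. c(t:=None)) ` B a) = card (B a)" using cdel unfolding del_def by simp
  show "\<forall>a<q. UU ((\<lambda>c. c(t:=None)) ` B a) - UU (F \<union> G) = X a"
    using UUdel unfolding del_def Xd UU_Un by auto
  have sub1: "\<And>a. F \<union> G \<union> B a \<subseteq> F \<union> Q" unfolding G_def B_def by auto
  have fIt: "finite (I - {t})" using fI by auto
  show "\<forall>a<q. 1 + (q - 1) * card (X a) \<le> card (B a)"
  proof (intro allI impI)
    fix a assume a: "a < q"
    have "Gprop q (I - {t}) (F \<union> G) (del ` B a)" using IH cBlt[OF a] cdel[of a] by simp
    moreover have "cpart q (I - {t}) ((F \<union> G) \<union> del ` B a)"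
      using slice_cpart[OF P tI a] slq a by simp
    moreover have "del ` B a \<noteq> {}" using Bne a by auto
    ultimately have "1 + (q - 1) * card (UU (del ` B a) - UU (F \<union> G)) \<le> card (del ` B a)"
      unfolding Gprop_def using fIt disj a by blast
    then show "1 + (q - 1) * card (X a) \<le> card (B a)"
    proof -
      note that = \<open>1 + (q - 1) * card (UU (del ` B a) - UU (F \<union> G)) \<le> card (del ` B a)\<close>
      have e: "UU (B a) - {t} - (UU F \<union> UU G) = UU (B a) - {t} - UU F - UU G" by blast
      show ?thesis using that unfolding Xd UUdel UU_Un cdel e by simp
    qed
  qed
  show "\<forall>a<q. 1 + (q - 1) * card (Y a) \<le> card G + card (B a)"
  proof (intro allI impI)
    fix a assume a: "a < q"
    have cle: "card (G \<union> del ` B a) \<le> card G + card (B a)" using card_Un_le cdel by metis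
    have "Gprop q (I - {t}) F (G \<union> del ` B a)" using IH cBlt[OF a] cle by simp
    moreover have "cpart q (I - {t}) (F \<union> (G \<union> del ` B a))"
      using slice_cpart[OF P tI a] slq a by (simp add: Un_assoc)
    moreover have "G \<union> del ` B a \<noteq> {}" using Bne a by auto
    moreover have "F \<inter> (G \<union> del ` B a) = {}" using disj a FQ unfolding G_def by auto
    ultimately have "1 + (q - 1) * card (UU (G \<union> del ` B a) - UU F) \<le> card (G \<union> del ` B a)"
      unfolding Gprop_def using fIt by blast
    then show "1 + (q - 1) * card (Y a) \<le> card G + card (B a)"
      using cle unfolding Yd UUdel UU_Un by linarith
  qed
  have tB: "\<And>a. a < q \<Longrightarrow> t \<in> UU (B a)" using Bne unfolding B_def UU_def by fastforce
  have UUQ: "UU Q = UU G \<union> (\<Union>a<q. UU (B a))"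
    by (subst Qdec) (auto simp: UU_def)
  have q0: "0 < q" using q by auto
  show "UU Q - UU F = insert t (Z \<union> (\<Union>a<q. X a))"
    unfolding UUQ Zd Xd using tB tF q0 by blast
  show "UU Q - UU F = insert t (\<Union>a<q. Y a)"
    unfolding UUQ Yd using tB tF q0 by blast
  show "\<forall>a<q. Z \<subseteq> Y a" unfolding Zd Yd by auto
  have fG': "finite (UU G)" by (rule fUU) (auto simp: G_def)
  have fB': "\<And>a. finite (UU (B a))" by (rule fUU) (auto simp: B_def)
  show "finite Z" unfolding Zd using fG' by auto
  show "\<forall>a<q. finite (X a)" unfolding Xd using fB' by auto
  show "\<forall>a<q. finite (Y a)" unfolding Yd using fB' fG' by auto
qed

lemma card_insert_le': "finite A \<Longrightarrow> card (insert t A) \<le> 1 + card A"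
  by (simp add: card_insert_if)

lemma arith_G:
  fixes q g cQ :: nat and b :: "nat \<Rightarrow> nat" and X Y :: "nat \<Rightarrow> nat set" and Z D :: "nat set"
  assumes q: "q \<ge> 2" and cQ: "cQ = g + (\<Sum>a<q. b a)"
    and R1: "\<forall>a<q. 1 + (q - 1) * card (X a) \<le> b a"
    and R2: "\<forall>a<q. 1 + (q - 1) * card (Y a) \<le> g + b a"
    and D1: "D = insert t (Z \<union> (\<Union>a<q. X a))" and D2: "D = insert t (\<Union>a<q. Y a)"
    and ZY: "\<forall>a<q. Z \<subseteq> Y a" and fZ: "finite Z" and fX: "\<forall>a<q. finite (X a)" and fY: "\<forall>a<q. finite (Y a)"
  shows "1 + (q - 1) * card D \<le> cQ"
proof -
  obtain r where r: "q = Suc r" using q by (cases q) auto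
  have rr: "q - 1 = r" using r by simp
  define SX where "SX = (\<Sum>a<q. card (X a))"
  define SY where "SY = (\<Sum>a<q. card (Y a))"
  define SB where "SB = (\<Sum>a<q. b a)"
  define UY where "UY = card (\<Union>a<q. Y a)"
  define z where "z = card Z"
  have cD1: "card D \<le> 1 + z + SX"
  proof -
    have "card D \<le> 1 + card (Z \<union> (\<Union>a<q. X a))" unfolding D1 using fZ fX by (intro card_insert_le') auto
    also have "\<dots> \<le> 1 + (card Z + card (\<Union>a<q. X a))" using card_Un_le by simp
    also have "\<dots> \<le> 1 + z + SX" unfolding z_def SX_def using card_UN_le[of "{..<q}" X] by simp
    finally show ?thesis .
  qed
  have cD2: "card D \<le> 1 + UY" unfolding D2 UY_def using fY by (intro card_insert_le') auto
  have SYge: "UY + r * z \<le> SY" unfolding UY_def z_def SY_def using sum_ge_union_plus[of q Y Z] fY ZY q rr by auto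
  have S1: "q + r * SX \<le> SB"
  proof -
    have "(\<Sum>a<q. 1 + r * card (X a)) \<le> SB" unfolding SB_def using R1 rr by (intro sum_mono) auto
    moreover have "(\<Sum>a<q. 1 + r * card (X a)) = q + r * SX" unfolding SX_def sum.distrib sum_distrib_left by simp
    ultimately show ?thesis by simp
  qed
  have S2: "q + r * SY \<le> q * g + SB"
  proof -
    have "(\<Sum>a<q. 1 + r * card (Y a)) \<le> (\<Sum>a<q. g + b a)" using R2 rr by (intro sum_mono) auto
    moreover have "(\<Sum>a<q. 1 + r * card (Y a)) = q + r * SY" unfolding SY_def sum.distrib sum_distrib_left by simp
    moreover have "(\<Sum>a<q. g + b a) = q * g + SB" unfolding SB_def by (simp add: sum.distrib)
    ultimately show ?thesis by simp
  qed
  have cQ': "cQ = g + SB" unfolding cQ SB_def ..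
  have rD: "(q - 1) * card D = r * card D" using rr by simp
  show ?thesis
  proof (cases "r * z \<le> g")
    case True
    have "r * card D \<le> r * (1 + z + SX)" using cD1 by (rule mult_left_mono) simp
    then have "r * card D \<le> r + r * z + r * SX" by (simp add: algebra_simps)
    then show ?thesis using True S1 cQ' r rD by linarith
  next
    case False
    have "r * card D \<le> r * (1 + UY)" using cD2 by (rule mult_left_mono) simp
    then have a1: "r * card D \<le> r + r * UY" by (simp add: algebra_simps)
    have "r * (UY + r * z) \<le> r * SY" using SYge by (rule mult_left_mono) simp
    then have a2: "r * UY + r * (r * z) \<le> r * SY" by (simp add: algebra_simps)
    have "r * g \<le> r * (r * z)" using False by (intro mult_left_mono) auto
    moreover have "q * g = r * g + g" using r by simp
    ultimately show ?thesis using a1 a2 S2 cQ' r rD by linarith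
  qed
qed

lemma G_ineq:
  assumes q: "q \<ge> 2"
  shows "Gprop q I F Q"
proof (induction "card Q" arbitrary: I F Q rule: less_induct)
  case less
  show ?case unfolding Gprop_def
  proof (intro impI, elim conjE)
    assume fI: "finite I" and P: "cpart q I (F \<union> Q)" and FQ: "F \<inter> Q = {}" and Qne: "Q \<noteq> {}"
    have fQ: "finite Q" using cpart_finite[OF fI P] by auto
    show "1 + (q - 1) * card (UU Q - UU F) \<le> card Q"
    proof (cases "UU Q - UU F = {}")
      case True
      have "card Q \<ge> 1" using fQ Qne by (simp add: Suc_leI card_gt_0_iff)
      then show ?thesis unfolding True by simp
    next
      case False
      then obtain t where t: "t \<in> UU Q" "t \<notin> UU F" by auto
      have IH: "\<And>I' F' Q'. card Q' < card Q \<Longrightarrow> Gprop q I' F' Q'" using less by blast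
      note R = routes[OF q fI P FQ t IH]
      show ?thesis
        by (rule arith_G[OF q R(1) R(3) R(4) R(5) R(6) R(7) R(8) R(9) R(10)])
    qed
  qed
qed

lemma G_ineq':
  "q \<ge> 2 \<Longrightarrow> finite I \<Longrightarrow> cpart q I (F \<union> Q) \<Longrightarrow> F \<inter> Q = {} \<Longrightarrow> Q \<noteq> {} \<Longrightarrow>
    1 + (q - 1) * card (UU Q - UU F) \<le> card Q"
  using G_ineq unfolding Gprop_def by blast

lemma a_ineq:
  "q \<ge> 2 \<Longrightarrow> finite I \<Longrightarrow> cpart q I P \<Longrightarrow> 1 + (q - 1) * card (UU P) \<le> card P"
  using G_ineq'[of q I "{}" P] cpart_ne[of q I P] by (simp add: UU_def)

lemma card_UN_eq_disj:
  fixes X :: "nat \<Rightarrow> 'a set"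
  assumes fX: "\<forall>a<q. finite (X a)" and e: "(\<Sum>a<q. card (X a)) \<le> card (\<Union>a<q. X a)"
    and a: "a < q" and b: "b < q" and ab: "a \<noteq> b"
  shows "X a \<inter> X b = {}"
proof (rule ccontr)
  assume "X a \<inter> X b \<noteq> {}"
  then obtain x where x: "x \<in> X a" "x \<in> X b" by auto
  define X' where "X' c = (if c = b then X b - {x} else X c)" for c
  have U: "(\<Union>c<q. X' c) = (\<Union>c<q. X c)" using x a ab unfolding X'_def by auto
  have "card (\<Union>c<q. X' c) \<le> (\<Sum>c<q. card (X' c))" by (rule card_UN_le) simp
  moreover have "(\<Sum>c<q. card (X' c)) < (\<Sum>c<q. card (X c))"
  proof (rule sum_strict_mono_ex1)
    show "\<forall>c\<in>{..<q}. card (X' c) \<le> card (X c)" unfolding X'_def using fX by (auto intro: card_mono)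
    show "\<exists>c\<in>{..<q}. card (X' c) < card (X c)"
    proof (intro bexI[of _ b])
      have "finite (X b)" using fX b by auto
      moreover have "card (X b) > 0" using x(2) \<open>finite (X b)\<close> card_gt_0_iff by blast
      ultimately show "card (X' b) < card (X b)" unfolding X'_def using x(2) by simp
    qed (use b in auto)
  qed simp
  ultimately show False using U e by (metis leD le_trans)
qed

lemma sum_eq_pointwise:
  fixes f g :: "nat \<Rightarrow> nat"
  assumes le: "\<forall>a<q. f a \<le> g a" and s: "(\<Sum>a<q. g a) \<le> (\<Sum>a<q. f a)" and a: "a < q"
  shows "f a = g a"
proof (rule ccontr)
  assume "f a \<noteq> g a"
  then have "f a < g a" using le a by force
  then have "(\<Sum>a<q. f a) < (\<Sum>a<q. g a)"
    using le a by (intro sum_strict_mono_ex1) auto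
  then show False using s by linarith
qed

lemma arith_tight:
  fixes q g cQ :: nat and b :: "nat \<Rightarrow> nat" and X Y :: "nat \<Rightarrow> nat set" and Z D :: "nat set"
  assumes q: "q \<ge> 2" and cQ: "cQ = g + (\<Sum>a<q. b a)"
    and R1: "\<forall>a<q. 1 + (q - 1) * card (X a) \<le> b a"
    and R2: "\<forall>a<q. 1 + (q - 1) * card (Y a) \<le> g + b a"
    and D1: "D = insert t (Z \<union> (\<Union>a<q. X a))" and D2: "D = insert t (\<Union>a<q. Y a)"
    and ZY: "\<forall>a<q. Z \<subseteq> Y a" and fZ: "finite Z" and fX: "\<forall>a<q. finite (X a)" and fY: "\<forall>a<q. finite (Y a)"
    and tight: "cQ = 1 + (q - 1) * card D"
  shows "\<forall>a<q. b a = 1 + (q - 1) * card (X a)"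
    and "\<forall>a<q. \<forall>a'<q. a \<noteq> a' \<longrightarrow> X a \<inter> X a' = {}"
proof -
  obtain r where r: "q = Suc r" using q by (cases q) auto
  have r1: "r \<ge> 1" using q r by simp
  have rr: "q - 1 = r" using r by simp
  define SX where "SX = (\<Sum>a<q. card (X a))"
  define SY where "SY = (\<Sum>a<q. card (Y a))"
  define SB where "SB = (\<Sum>a<q. b a)"
  define UY where "UY = card (\<Union>a<q. Y a)"
  define UX where "UX = card (\<Union>a<q. X a)"
  define z where "z = card Z"
  have UXS: "UX \<le> SX" unfolding UX_def SX_def by (rule card_UN_le) simp
  have cD1: "card D \<le> 1 + z + UX"
  proof -
    have "card D \<le> 1 + card (Z \<union> (\<Union>a<q. X a))" unfolding D1 using fZ fX by (intro card_insert_le') auto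
    also have "\<dots> \<le> 1 + (card Z + card (\<Union>a<q. X a))" using card_Un_le by simp
    finally show ?thesis unfolding z_def UX_def by simp
  qed
  have cD2: "card D \<le> 1 + UY" unfolding D2 UY_def using fY by (intro card_insert_le') auto
  have SYge: "UY + r * z \<le> SY" unfolding UY_def z_def SY_def using sum_ge_union_plus[of q Y Z] fY ZY q rr by auto
  have S1: "q + r * SX \<le> SB"
  proof -
    have "(\<Sum>a<q. 1 + r * card (X a)) \<le> SB" unfolding SB_def using R1 rr by (intro sum_mono) auto
    moreover have "(\<Sum>a<q. 1 + r * card (X a)) = q + r * SX" unfolding SX_def sum.distrib sum_distrib_left by simp
    ultimately show ?thesis by simp
  qed
  have S2: "q + r * SY \<le> q * g + SB"
  proof -
    have "(\<Sum>a<q. 1 + r * card (Y a)) \<le> (\<Sum>a<q. g + b a)" using R2 rr by (intro sum_mono) auto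
    moreover have "(\<Sum>a<q. 1 + r * card (Y a)) = q + r * SY" unfolding SY_def sum.distrib sum_distrib_left by simp
    moreover have "(\<Sum>a<q. g + b a) = q * g + SB" unfolding SB_def by (simp add: sum.distrib)
    ultimately show ?thesis by simp
  qed
  have cQ': "cQ = g + SB" unfolding cQ SB_def ..
  have rD: "(q - 1) * card D = r * card D" using rr by simp
  have a1: "r * card D \<le> r + r * UY" using mult_left_mono[OF cD2, of r] by (simp add: algebra_simps)
  have a2: "r * UY + r * (r * z) \<le> r * SY" using mult_left_mono[OF SYge, of r] by (simp add: algebra_simps)
  have qg: "q * g = r * g + g" using r by simp
  have "r * (r * z) \<le> r * g" using a1 a2 S2 cQ' tight rD qg r by linarith
  then have gz: "r * z \<le> g" using r1 by simp
  have a3: "r * card D \<le> r + r * z + r * UX" using mult_left_mono[OF cD1, of r] by (simp add: algebra_simps)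
  have "r * SX \<le> r * UX" using a3 gz S1 cQ' tight rD r by linarith
  then have SXU: "SX \<le> UX" using r1 by simp
  have "r * UX = r * SX" using UXS SXU by simp
  then have SBle: "SB \<le> q + r * SX" using a3 gz cQ' tight rD r by linarith
  show "\<forall>a<q. b a = 1 + (q - 1) * card (X a)"
  proof (intro allI impI)
    fix a assume a: "a < q"
    have "(\<Sum>a<q. b a) \<le> (\<Sum>a<q. 1 + r * card (X a))"
      using SBle unfolding SB_def SX_def sum.distrib sum_distrib_left by simp
    then show "b a = 1 + (q - 1) * card (X a)"
      using sum_eq_pointwise[of q "\<lambda>a. 1 + r * card (X a)" b a] R1 rr a by auto
  qed
  show "\<forall>a<q. \<forall>a'<q. a \<noteq> a' \<longrightarrow> X a \<inter> X a' = {}"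
    using card_UN_eq_disj[of q X] fX SXU unfolding SX_def UX_def by blast
qed

definition sibs :: "nat \<Rightarrow> (nat \<Rightarrow> nat option) set \<Rightarrow> nat \<Rightarrow> (nat \<Rightarrow> nat option) \<Rightarrow> bool" where
  "sibs q P j c0 \<longleftrightarrow> j \<notin> dom c0 \<and> (\<forall>b<q. c0(j \<mapsto> b) \<in> P) \<and> (\<forall>c\<in>P. j \<in> dom c \<longrightarrow> c(j:=None) = c0)"

lemma upd_del_same: "c t = Some a \<Longrightarrow> (c(t:=None))(t \<mapsto> a) = c"
  by (rule ext) auto

lemma Gs:
  assumes q: "q \<ge> 2"
  shows "finite I \<Longrightarrow> cpart q I (F \<union> Q) \<Longrightarrow> F \<inter> Q = {} \<Longrightarrow>
    card Q = 1 + (q - 1) * card (UU Q - UU F) \<Longrightarrow> UU Q - UU F \<noteq> {} \<Longrightarrow>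
    \<exists>j c0. j \<in> UU Q - UU F \<and> sibs q (F \<union> Q) j c0 \<and> (\<forall>b<q. c0(j \<mapsto> b) \<in> Q)"
proof (induction "card Q" arbitrary: I F Q rule: less_induct)
  case less
  note fI = less.prems(1) and P = less.prems(2) and FQ = less.prems(3) and tight = less.prems(4) and Dne = less.prems(5)
  obtain t where t: "t \<in> UU Q" "t \<notin> UU F" using Dne by auto
  have IHG: "\<And>I' F' Q'. card Q' < card Q \<Longrightarrow> Gprop q I' F' Q'" using G_ineq[OF q] by blast
  define G where "G = {c\<in>Q. c t = None}"
  define B where "B a = {c\<in>Q. c t = Some a}" for a
  define X where "X a = UU (B a) - {t} - UU F - UU G" for a
  define del where "del = (\<lambda>c::nat \<Rightarrow> nat option. c(t:=None))"
  note R = routes[OF q fI P FQ t IHG]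
  note T = arith_tight[OF q R(1) R(3) R(4) R(5) R(6) R(7) R(8) R(9) R(10) tight]
  have Bcard: "\<forall>a<q. card (B a) = 1 + (q - 1) * card (X a)" using T(1) unfolding B_def X_def G_def by simp
  have Xdisj: "\<forall>a<q. \<forall>a'<q. a \<noteq> a' \<longrightarrow> X a \<inter> X a' = {}" using T(2) unfolding B_def X_def G_def by simp
  have Bne: "\<forall>a<q. B a \<noteq> {}" using R(2) unfolding B_def by simp
  have slq: "\<forall>a<q. sl t a (F \<union> Q) = F \<union> G \<union> del ` B a" using R(11) unfolding B_def G_def del_def by simp
  have disj: "\<forall>a<q. (F \<union> G) \<inter> del ` B a = {}" using R(12) unfolding B_def G_def del_def by simp
  have tI: "t \<in> I" using R(13) .
  have cdel: "\<forall>a<q. card (del ` B a) = card (B a)" using R(14) unfolding B_def del_def by simp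
  have UUX: "\<forall>a<q. UU (del ` B a) - UU (F \<union> G) = X a" using R(15) unfolding B_def del_def X_def G_def by simp
  have Fnone: "\<And>c. c \<in> F \<Longrightarrow> c t = None" using t(2) unfolding UU_def by auto
  have vc: "\<And>c. c \<in> F \<union> Q \<Longrightarrow> vcode q I c" using P cpart_vcode by blast
  have Qdec: "\<And>c. c \<in> Q \<Longrightarrow> c \<in> G \<or> (\<exists>a<q. c \<in> B a)"
  proof -
    fix c assume c: "c \<in> Q"
    show "c \<in> G \<or> (\<exists>a<q. c \<in> B a)"
    proof (cases "c t")
      case None then show ?thesis using c unfolding G_def by auto
    next
      case (Some v)
      then have "t \<in> dom c" by auto
      then have "the (c t) < q" using vc c unfolding vcode_def by blast
      then show ?thesis using Some c unfolding B_def by auto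
    qed
  qed
  have other: "\<And>a. a < q \<Longrightarrow> \<exists>b<q. b \<noteq> a"
  proof -
    fix a assume "a < q"
    show "\<exists>b<q. b \<noteq> a" by (rule exI[of _ "if a = 0 then 1 else 0"]) (use q in auto)
  qed
  have fQ: "finite Q" using cpart_finite[OF fI P] by auto
  have cBlt: "\<And>a. a < q \<Longrightarrow> card (B a) < card Q"
  proof -
    fix a assume a: "a < q"
    obtain b where b: "b < q" "b \<noteq> a" using other[OF a] by blast
    have "B a \<subset> Q"
    proof -
      obtain c where "c \<in> B b" using Bne b by blast
      then have "c \<in> Q" "c \<notin> B a" using b unfolding B_def by auto
      then show ?thesis unfolding B_def by auto
    qed
    then show "card (B a) < card Q" using fQ by (simp add: psubset_card_mono)
  qed
  show ?case
  proof (cases "\<exists>a<q. X a \<noteq> {}")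
    case True
    then obtain a where a: "a < q" "X a \<noteq> {}" by blast
    have P': "cpart q (I - {t}) ((F \<union> G) \<union> del ` B a)"
      using slice_cpart[OF P tI a(1)] slq a by simp
    have tight': "card (del ` B a) = 1 + (q - 1) * card (UU (del ` B a) - UU (F \<union> G))"
      using cdel Bcard UUX a by simp
    have lt: "card (del ` B a) < card Q" using cdel cBlt a by simp
    obtain j c0' where j: "j \<in> UU (del ` B a) - UU (F \<union> G)" and sb: "sibs q ((F \<union> G) \<union> del ` B a) j c0'"
      and sbQ: "\<forall>b<q. c0'(j \<mapsto> b) \<in> del ` B a"
      using less.hyps[OF lt _ P' disj[rule_format, OF a(1)] tight'] UUX a fI by auto
    have jX: "j \<in> X a" using j UUX a by auto
    have jt: "j \<noteq> t" using jX unfolding X_def by auto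
    define c0 where "c0 = c0'(t \<mapsto> a)"
    have jD: "j \<in> UU Q - UU F" using jX unfolding X_def B_def UU_def by auto
    have j0: "j \<notin> dom c0" using sb jt unfolding sibs_def c0_def by auto
    have inQ: "\<forall>b<q. c0(j \<mapsto> b) \<in> Q"
    proof (intro allI impI)
      fix b assume b: "b < q"
      obtain d where d: "d \<in> B a" "c0'(j \<mapsto> b) = del d" using sbQ b by blast
      have "d t = Some a" using d(1) unfolding B_def by simp
      then have "d = (del d)(t \<mapsto> a)" unfolding del_def by (metis upd_del_same)
      also have "\<dots> = c0(j \<mapsto> b)" using d(2) jt unfolding c0_def by (simp add: fun_upd_twist)
      finally show "c0(j \<mapsto> b) \<in> Q" using d(1) unfolding B_def by auto
    qed
    have uniq: "\<forall>c\<in>F \<union> Q. j \<in> dom c \<longrightarrow> c(j:=None) = c0"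
    proof (intro ballI impI)
      fix c assume c: "c \<in> F \<union> Q" and jc: "j \<in> dom c"
      have "c \<notin> F" using jD jc unfolding UU_def by auto
      then have cQ: "c \<in> Q" using c by auto
      have "c \<notin> G" using jX jc unfolding X_def UU_def by auto
      then obtain a' where a': "a' < q" "c \<in> B a'" using Qdec[OF cQ] by blast
      have j1: "j \<in> UU (B a')" using a'(2) jc unfolding UU_def by auto
      have j2: "j \<notin> UU F" "j \<notin> UU G" using jD jX unfolding X_def by auto
      have "j \<in> X a'" using j1 j2 jt unfolding X_def by auto
      then have "a' = a" using Xdisj a a' jX by blast
      then have cB: "c \<in> B a" using a' by simp
      have "del c \<in> (F \<union> G) \<union> del ` B a" using cB by auto
      moreover have "j \<in> dom (del c)" using jc jt unfolding del_def by auto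
      ultimately have "(del c)(j:=None) = c0'" using sb unfolding sibs_def by blast
      then have "((del c)(j:=None))(t \<mapsto> a) = c0" unfolding c0_def by simp
      moreover have "((del c)(j:=None))(t \<mapsto> a) = c(j:=None)"
        using cB jt unfolding B_def del_def by (auto simp: fun_upd_twist upd_del_same)
      ultimately show "c(j:=None) = c0" by simp
    qed
    show ?thesis using jD j0 inQ uniq unfolding sibs_def by blast
  next
    case False
    then have B1: "\<forall>a<q. card (B a) = 1" using Bcard by simp
    have "\<forall>a<q. \<exists>d. B a = {d}" using B1 by (simp add: card_1_singleton_iff)
    then obtain d where d: "\<forall>a<q. B a = {d a}" by metis
    define e where "e a = del (d a)" for a
    have sla: "\<forall>a<q. cpart q (I - {t}) (F \<union> G \<union> {e a})"
      using slice_cpart[OF P tI] slq d unfolding e_def by simp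
    have edisj: "\<forall>a<q. e a \<notin> F \<union> G" using disj d unfolding e_def by auto
    have esub: "\<And>a b. a < q \<Longrightarrow> b < q \<Longrightarrow> \<forall>x\<in>hc q (I - {t}). agrees x (e a) \<longrightarrow> agrees x (e b)"
    proof (intro ballI impI)
      fix a b x assume a: "a < q" and b: "b < q" and x: "x \<in> hc q (I - {t})" and ag: "agrees x (e a)"
      obtain c where c: "c \<in> F \<union> G \<union> {e b}" "agrees x c" using cpart_ex[OF sla[rule_format, OF b] x] by blast
      show "agrees x (e b)"
      proof (cases "c = e b")
        case True then show ?thesis using c by simp
      next
        case False
        then have "c \<in> F \<union> G \<union> {e a}" using c by auto
        then have "c = e a" using cpart_uniq[OF sla[rule_format, OF a] x _ _ c(2) ag] by blast
        then show ?thesis using False c edisj a by auto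
      qed
    qed
    have ve: "\<And>a. a < q \<Longrightarrow> vcode q (I - {t}) (e a)" using sla cpart_vcode by blast
    have eeq: "\<forall>a<q. e a = e 0"
    proof (intro allI impI)
      fix a assume a: "a < q"
      have q0: "0 < q" using q by simp
      have "e 0 \<subseteq>\<^sub>m e a" using L_sub[OF ve[OF a] ve[OF q0] q] esub[OF a q0] by blast
      moreover have "e a \<subseteq>\<^sub>m e 0" using L_sub[OF ve[OF q0] ve[OF a] q] esub[OF q0 a] by blast
      ultimately show "e a = e 0" using map_le_antisym by blast
    qed
    have dB: "\<forall>a<q. d a t = Some a" using d unfolding B_def by blast
    have dval: "\<forall>a<q. d a = (e 0)(t \<mapsto> a)"
      using dB eeq unfolding e_def del_def by (metis upd_del_same)
    have t0: "t \<notin> dom (e 0)" unfolding e_def del_def by simp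
    have inQ: "\<forall>b<q. (e 0)(t \<mapsto> b) \<in> Q"
    proof (intro allI impI)
      fix b assume b: "b < q"
      have "d b \<in> B b" using d b by auto
      then have "d b \<in> Q" unfolding B_def by auto
      then show "(e 0)(t \<mapsto> b) \<in> Q" using dval b by metis
    qed
    have uniq: "\<forall>c\<in>F \<union> Q. t \<in> dom c \<longrightarrow> c(t:=None) = e 0"
    proof (intro ballI impI)
      fix c assume c: "c \<in> F \<union> Q" and tc: "t \<in> dom c"
      have "c \<notin> F" using Fnone tc by fastforce
      then have cQ: "c \<in> Q" using c by auto
      have "c \<notin> G" using tc unfolding G_def by auto
      then obtain a' where a': "a' < q" "c \<in> B a'" using Qdec[OF cQ] by blast
      then have "c = d a'" using d by auto
      then have "c(t:=None) = e a'" unfolding e_def del_def by simp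
      moreover have "e a' = e 0" using eeq a'(1) by blast
      ultimately show "c(t:=None) = e 0" by (rule trans)
    qed
    have tD: "t \<in> UU Q - UU F" using t by auto
    show ?thesis using tD t0 inQ uniq unfolding sibs_def by blast
  qed
qed



lemma merge:
  assumes q: "q \<ge> 2" and fI: "finite I" and P: "cpart q I P" and sb: "sibs q P j c0"
  defines "S \<equiv> (\<lambda>b. c0(j \<mapsto> b)) ` {..<q}"
  shows "cpart q I ((P - S) \<union> {c0})"
    and "card ((P - S) \<union> {c0}) + (q - 1) = card P"
    and "UU ((P - S) \<union> {c0}) = UU P - {j}"
    and "c0 \<notin> P" and "S \<subseteq> P" and "card S = q"
    and "\<And>c. c \<in> S \<Longrightarrow> dom c0 \<subseteq> dom c"
    and "finite P"
proof -
  have j0: "j \<notin> dom c0" and inP: "\<forall>b<q. c0(j \<mapsto> b) \<in> P" and un: "\<forall>c\<in>P. j \<in> dom c \<longrightarrow> c(j:=None) = c0"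
    using sb unfolding sibs_def by auto
  have q0: "0 < q" using q by auto
  have SP: "S \<subseteq> P" unfolding S_def using inP by auto
  then show "S \<subseteq> P" .
  have c0P: "c0 \<notin> P"
  proof -
    have "c0(j \<mapsto> 0) \<in> P" using inP q0 by auto
    moreover have "(c0(j \<mapsto> 0))(j:=None) = c0" using j0 by (auto simp: domIff)
    ultimately show ?thesis using del_notin[OF P, of "c0(j \<mapsto> 0)" j] q by auto
  qed
  then show "c0 \<notin> P" .
  have v0: "vcode q I (c0(j \<mapsto> 0))" using cpart_vcode[OF P] inP q0 by auto
  have vc0: "vcode q I c0" using v0 j0 unfolding vcode_def by (auto split: if_splits)
  have le0: "\<And>b. c0 \<subseteq>\<^sub>m c0(j \<mapsto> b)" using j0 unfolding map_le_def by (auto simp: domIff)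
  show "\<And>c. c \<in> S \<Longrightarrow> dom c0 \<subseteq> dom c" unfolding S_def by auto
  have jI: "j \<in> I" using v0 unfolding vcode_def by auto
  show "cpart q I ((P - S) \<union> {c0})"
    unfolding cpart_def
  proof (intro conjI ballI)
    fix c assume "c \<in> (P - S) \<union> {c0}"
    then show "vcode q I c" using cpart_vcode[OF P] vc0 by auto
  next
    fix x assume x: "x \<in> hc q I"
    obtain c where c: "c \<in> P" "agrees x c" using cpart_ex[OF P x] by blast
    have xj: "x j < q" using x jI unfolding hc_def by auto
    show "\<exists>!c\<in>(P - S) \<union> {c0}. agrees x c"
    proof (cases "c \<in> S")
      case True
      then obtain b where cb: "c = c0(j \<mapsto> b)" unfolding S_def by auto
      have ag0: "agrees x c0" using agrees_mono[OF c(2)] le0[of b] cb by simp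
      show ?thesis
      proof (rule ex1I[of _ c0])
        show "c0 \<in> (P - S) \<union> {c0} \<and> agrees x c0" using ag0 by simp
      next
        fix d assume d: "d \<in> (P - S) \<union> {c0} \<and> agrees x d"
        show "d = c0"
        proof (rule ccontr)
          assume "d \<noteq> c0"
          then have "d \<in> P - S" using d by auto
          then have "d = c" using cpart_uniq[OF P x _ c(1) _ c(2)] d by blast
          then show False using True \<open>d \<in> P - S\<close> by simp
        qed
      qed
    next
      case False
      show ?thesis
      proof (rule ex1I[of _ c])
        show "c \<in> (P - S) \<union> {c0} \<and> agrees x c" using c False by simp
      next
        fix d assume d: "d \<in> (P - S) \<union> {c0} \<and> agrees x d"
        show "d = c"
        proof (cases "d = c0")
          case True
          have "agrees x (c0(j \<mapsto> x j))" using d True unfolding agrees_def by auto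
          moreover have "c0(j \<mapsto> x j) \<in> P" using inP xj by auto
          ultimately have "c0(j \<mapsto> x j) = c" using cpart_uniq[OF P x _ c(1) _ c(2)] by blast
          then have "c \<in> S" unfolding S_def using xj by auto
          then show ?thesis using False by simp
        next
          case False
          then have "d \<in> P" using d by auto
          then show ?thesis using cpart_uniq[OF P x _ c(1) _ c(2)] d by blast
        qed
      qed
    qed
  qed
  have injS: "inj_on (\<lambda>b. c0(j \<mapsto> b)) {..<q}"
    by (rule inj_onI) (metis fun_upd_same option.inject)
  have cS: "card S = q" unfolding S_def using injS by (simp add: card_image)
  then show "card S = q" .
  have True: "finite P" using cpart_finite[OF fI P] .
  then show "finite P" .
  show "card ((P - S) \<union> {c0}) + (q - 1) = card P"
  proof -
    have "card ((P - S) \<union> {c0}) = card (P - S) + 1" using c0P True by simp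
    moreover have "card (P - S) = card P - q" using SP True cS card_Diff_subset[of S P] finite_subset[OF SP True] by simp
    moreover have "card P \<ge> q" using SP True cS card_mono by metis
    ultimately show ?thesis using q by simp
  qed
  show "UU ((P - S) \<union> {c0}) = UU P - {j}"
  proof -
    have jn: "\<And>c. c \<in> P - S \<Longrightarrow> j \<notin> dom c"
    proof
      fix c assume c: "c \<in> P - S" and jc: "j \<in> dom c"
      then have e: "c(j:=None) = c0" using un by auto
      obtain v where v: "c j = Some v" using jc by auto
      have "vcode q I c" using cpart_vcode[OF P] c by blast
      then have "the (c j) < q" using jc unfolding vcode_def by blast
      then have "v < q" using v by simp
      moreover have "c = c0(j \<mapsto> v)" using e v by (metis upd_del_same)
      ultimately have "c \<in> S" unfolding S_def by auto
      then show False using c by simp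
    qed
    have US: "UU S = insert j (dom c0)" unfolding S_def UU_def using q0 by auto
    have "UU P = UU (P - S) \<union> UU S" using SP unfolding UU_def by auto
    then show ?thesis using jn US j0 unfolding UU_def by auto
  qed
qed

lemma tight_total:
  assumes q: "q \<ge> 2"
  shows "finite I \<Longrightarrow> cpart q I P \<Longrightarrow> card P = 1 + (q - 1) * card (UU P) \<Longrightarrow> UU P \<noteq> {} \<Longrightarrow>
    \<exists>t. \<forall>c\<in>P. t \<in> dom c"
proof (induction "card P" arbitrary: P rule: less_induct)
  case less
  note fI = less.prems(1) and P = less.prems(2) and tight = less.prems(3) and Une = less.prems(4)
  obtain j c0 where j: "j \<in> UU P" and sb: "sibs q P j c0"
    using Gs[OF q fI, of "{}" P] P tight Une by (auto simp: UU_def)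
  define S where "S = (\<lambda>b. c0(j \<mapsto> b)) ` {..<q}"
  note M = merge[OF q fI P sb, folded S_def]
  have fP: "finite P" using M(8) .
  have fU: "finite (UU P)"
  proof -
    have "UU P \<subseteq> I" using cpart_vcode[OF P] unfolding UU_def vcode_def by blast
    then show ?thesis using fI finite_subset by blast
  qed
  define P' where "P' = (P - S) \<union> {c0}"
  have cP': "card P' + (q - 1) = card P" using M(2) unfolding P'_def .
  have UP': "UU P' = UU P - {j}" using M(3) unfolding P'_def .
  have "card (UU P) > 0" using j fU card_gt_0_iff by blast
  then have cU: "card (UU P') + 1 = card (UU P)" using UP' j fU by (simp add: card_Diff_singleton)
  have tight': "card P' = 1 + (q - 1) * card (UU P')"
  proof -
    have "card P = 1 + (q - 1) * (card (UU P') + 1)" using tight cU by simp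
    then show ?thesis using cP' by (simp add: algebra_simps)
  qed
  show ?case
  proof (cases "UU P' = {}")
    case True
    then have "card P' = 1" using tight' by simp
    then have "P' = {c0}" unfolding P'_def by (metis card_1_singletonE insertI1 insert_absorb Un_insert_right singleton_insert_inj_eq' Un_empty_right)
    then have "P - S = {}" unfolding P'_def using M(4) by auto
    then have "P \<subseteq> S" by auto
    moreover have "\<forall>c\<in>S. j \<in> dom c" unfolding S_def by auto
    ultimately show ?thesis by blast
  next
    case False
    have lt: "card P' < card P" using cP' q by simp
    obtain t where t: "\<forall>c\<in>P'. t \<in> dom c"
      using less.hyps[OF lt fI M(1)[folded P'_def] tight' False] by blast
    have "t \<in> dom c0" using t unfolding P'_def by auto
    then have "\<forall>c\<in>P. t \<in> dom c" using t M(7) unfolding P'_def by blast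
    then show ?thesis by blast
  qed
qed

lemma cube_eq_PiE:
  assumes "vcode q I c"
  shows "{x \<in> hc q I. agrees x c} = PiE I (\<lambda>i. if i \<in> dom c then {the (c i)} else {..<q})"
proof -
  have dI: "dom c \<subseteq> I" and lt: "\<forall>i\<in>dom c. the (c i) < q" using assms unfolding vcode_def by auto
  show ?thesis
  proof
    show "{x \<in> hc q I. agrees x c} \<subseteq> PiE I (\<lambda>i. if i \<in> dom c then {the (c i)} else {..<q})"
    proof
      fix x assume x: "x \<in> {x \<in> hc q I. agrees x c}"
      then have "x \<in> I \<rightarrow>\<^sub>E {..<q}" "agrees x c" unfolding hc_def by auto
      then show "x \<in> PiE I (\<lambda>i. if i \<in> dom c then {the (c i)} else {..<q})"
        unfolding agrees_def by (auto simp: PiE_def Pi_def)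
    qed
  next
    show "PiE I (\<lambda>i. if i \<in> dom c then {the (c i)} else {..<q}) \<subseteq> {x \<in> hc q I. agrees x c}"
    proof
      fix x assume x: "x \<in> PiE I (\<lambda>i. if i \<in> dom c then {the (c i)} else {..<q})"
      have "x \<in> hc q I" unfolding hc_def
      proof (rule PiE_I)
        fix i assume i: "i \<in> I"
        show "x i \<in> {..<q}"
        proof (cases "i \<in> dom c")
          case True
          have "x i \<in> (if i \<in> dom c then {the (c i)} else {..<q})" using x i by (simp add: PiE_iff)
          then have "x i = the (c i)" using True by simp
          then show ?thesis using lt True by auto
        next
          case False
          have "x i \<in> (if i \<in> dom c then {the (c i)} else {..<q})" using x i by (simp add: PiE_iff)
          then show ?thesis using False by simp
        qed
      next
        fix i assume "i \<notin> I" then show "x i = undefined" using x by (auto simp: PiE_def extensional_def)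
      qed
      moreover have "agrees x c" unfolding agrees_def
      proof
        fix i assume i: "i \<in> dom c"
        have iI: "i \<in> I" using i dI by auto
        have "x i \<in> (if i \<in> dom c then {the (c i)} else {..<q})" using x iI by (simp add: PiE_iff)
        then have "x i = the (c i)" using i by simp
        then show "c i = Some (x i)" using i by auto
      qed
      ultimately show "x \<in> {x \<in> hc q I. agrees x c}" by simp
    qed
  qed
qed

lemma cube_card:
  assumes v: "vcode q I c" and fI: "finite I"
  shows "card {x \<in> hc q I. agrees x c} = q ^ (card I - card (dom c))"
proof -
  have dI: "dom c \<subseteq> I" using v unfolding vcode_def by auto
  have "card {x \<in> hc q I. agrees x c} = (\<Prod>i\<in>I. card (if i \<in> dom c then {the (c i)} else {..<q}))"
    unfolding cube_eq_PiE[OF v] using fI by (simp add: card_PiE)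
  also have "\<dots> = (\<Prod>i\<in>I. if i \<in> dom c then 1 else q)" by (rule prod.cong) auto
  also have "\<dots> = (\<Prod>i\<in>I - dom c. q)"
    using fI by (simp add: prod.If_cases Diff_eq)
  also have "\<dots> = q ^ card (I - dom c)" by simp
  also have "card (I - dom c) = card I - card (dom c)"
    using dI fI by (simp add: card_Diff_subset finite_subset)
  finally show ?thesis .
qed

lemma hc_card: "finite I \<Longrightarrow> card (hc q I) = q ^ card I"
  unfolding hc_def by (simp add: card_PiE)

lemma volume:
  assumes q: "q \<ge> 1" and fI: "finite I" and P: "cpart q I P" and m: "\<forall>c\<in>P. card (dom c) \<le> m"
  shows "card P \<le> q ^ m"
proof -
  define n where "n = card I"
  define cube where "cube c = {x \<in> hc q I. agrees x c}" for c
  have fP: "finite P" using cpart_finite[OF fI P] .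
  have cov: "hc q I = (\<Union>c\<in>P. cube c)"
    unfolding cube_def using cpart_ex[OF P] by auto
  have dis: "\<forall>c\<in>P. \<forall>d\<in>P. c \<noteq> d \<longrightarrow> cube c \<inter> cube d = {}"
    unfolding cube_def using cpart_uniq[OF P] by blast
  have fh: "finite (hc q I)" unfolding hc_def using fI by (simp add: finite_PiE)
  have fc: "\<forall>c\<in>P. finite (cube c)" unfolding cube_def using fh by auto
  have "card (hc q I) = (\<Sum>c\<in>P. card (cube c))"
    unfolding cov using card_UN_disjoint[OF fP fc dis] .
  moreover have "\<forall>c\<in>P. q ^ (n - m) \<le> card (cube c)"
  proof
    fix c assume c: "c \<in> P"
    have "card (cube c) = q ^ (n - card (dom c))" unfolding cube_def n_def
      using cube_card[OF cpart_vcode[OF P c] fI] .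
    moreover have "n - m \<le> n - card (dom c)" using m c by auto
    ultimately show "q ^ (n - m) \<le> card (cube c)" using q by (simp add: power_increasing)
  qed
  ultimately have "card P * q ^ (n - m) \<le> q ^ n"
    using hc_card[OF fI] sum_mono[of P "\<lambda>_. q ^ (n - m)" "\<lambda>c. card (cube c)"] unfolding n_def by simp
  show "card P \<le> q ^ m"
  proof (cases "m \<le> n")
    case True
    then have "q ^ n = q ^ (n - m) * q ^ m" by (simp add: power_add[symmetric])
    then have "card P * q ^ (n - m) \<le> q ^ m * q ^ (n - m)"
      using \<open>card P * q ^ (n - m) \<le> q ^ n\<close> by (simp add: mult.commute)
    moreover have "q ^ (n - m) > 0" using q by simp
    ultimately show ?thesis using mult_le_cancel2 by (metis not_le mult_less_mono1)
  next
    case False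
    then have "card P \<le> q ^ n" using \<open>card P * q ^ (n - m) \<le> q ^ n\<close> by simp
    also have "\<dots> \<le> q ^ m" using False q by (simp add: power_increasing)
    finally show ?thesis .
  qed
qed



definition Nm :: "nat \<Rightarrow> nat \<Rightarrow> nat" where "Nm q m = (\<Sum>k<m. q ^ k)"

lemma Nm_Suc: "Nm q (Suc m) = 1 + q * Nm q m"
  unfolding Nm_def sum.lessThan_Suc_shift by (simp add: sum_distrib_left)

lemma Nm_pow: "q \<ge> 1 \<Longrightarrow> 1 + (q - 1) * Nm q m = q ^ m"
proof (induction m)
  case 0 then show ?case by (simp add: Nm_def)
next
  case (Suc m)
  have "1 + (q - 1) * Nm q (Suc m) = 1 + (q - 1) + q * ((q - 1) * Nm q m)"
    unfolding Nm_Suc by (simp add: algebra_simps)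
  also have "\<dots> = q + q * (q ^ m - 1)" using Suc by simp
  also have "\<dots> = q ^ Suc m" using Suc.prems by (simp add: algebra_simps right_diff_distrib')
  finally show ?case .
qed

lemma Nm_pos: "m \<ge> 1 \<Longrightarrow> Nm q m \<ge> 1"
  by (cases m) (auto simp: Nm_Suc)

definition parts :: "nat \<Rightarrow> nat \<Rightarrow> nat set \<Rightarrow> (nat \<Rightarrow> nat option) set set" where
  "parts q m I = {P. cpart q I P \<and> (\<forall>c\<in>P. card (dom c) \<le> m)}"

lemma parts_finite: "finite I \<Longrightarrow> finite (parts q m I)"
proof -
  assume fI: "finite I"
  have "parts q m I \<subseteq> Pow (vcodes q I)" unfolding parts_def using cpart_sub_vcodes by blast
  then show ?thesis using vcodes_finite[OF fI] finite_subset by blast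
qed

lemma split_parts:
  assumes q: "q \<ge> 2" and fI: "finite I" and m: "m \<ge> 1" and P: "P \<in> parts q m I"
  shows "(\<exists>t\<in>I. \<forall>c\<in>P. t \<in> dom c) \<or> card (UU P) \<le> Nm q m - 1"
proof (cases "card (UU P) \<ge> Nm q m")
  case True
  have cP: "cpart q I P" and dm: "\<forall>c\<in>P. card (dom c) \<le> m" using P unfolding parts_def by auto
  have a: "1 + (q - 1) * card (UU P) \<le> card P" using a_ineq[OF q fI cP] .
  have v: "card P \<le> q ^ m" using volume[OF _ fI cP dm] q by simp
  have e: "q ^ m = 1 + (q - 1) * Nm q m" using Nm_pow q by simp
  have "(q - 1) * card (UU P) \<le> (q - 1) * Nm q m" using a v e by linarith
  then have "card (UU P) \<le> Nm q m" using q by simp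
  then have cU: "card (UU P) = Nm q m" using True by simp
  then have tight: "card P = 1 + (q - 1) * card (UU P)" using a v e by simp
  have "Nm q m \<ge> 1" using Nm_pos[OF m] .
  then have "UU P \<noteq> {}" using cU by (metis card.empty not_one_le_zero)
  then obtain t where t: "\<forall>c\<in>P. t \<in> dom c" using tight_total[OF q fI cP tight] by blast
  obtain c where c: "c \<in> P" using cpart_ne[OF cP] q by auto
  have "t \<in> I" using t c cpart_vcode[OF cP c] unfolding vcode_def by auto
  then show ?thesis using t by blast
next
  case False
  then show ?thesis by (intro disjI2) linarith
qed

lemma recon:
  assumes P: "cpart q I P" and tot: "\<forall>c\<in>P. t \<in> dom c"
  shows "P = (\<Union>a<q. (\<lambda>c. c(t \<mapsto> a)) ` sl t a P)"
proof
  show "P \<subseteq> (\<Union>a<q. (\<lambda>c. c(t \<mapsto> a)) ` sl t a P)"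
  proof
    fix c assume c: "c \<in> P"
    obtain a where a: "c t = Some a" using tot c by auto
    have "the (c t) < q" using cpart_vcode[OF P c] tot c unfolding vcode_def by blast
    then have aq: "a < q" using a by simp
    have "c(t:=None) \<in> sl t a P" using c a unfolding sl_def by auto
    moreover have "c = (c(t:=None))(t \<mapsto> a)" using upd_del_same[of c t a] a by simp
    ultimately show "c \<in> (\<Union>a<q. (\<lambda>c. c(t \<mapsto> a)) ` sl t a P)" using aq by blast
  qed
next
  show "(\<Union>a<q. (\<lambda>c. c(t \<mapsto> a)) ` sl t a P) \<subseteq> P"
  proof
    fix d assume "d \<in> (\<Union>a<q. (\<lambda>c. c(t \<mapsto> a)) ` sl t a P)"
    then obtain a c where c: "c \<in> P" "c t = None \<or> c t = Some a" "d = (c(t:=None))(t \<mapsto> a)"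
      unfolding sl_def by auto
    have "c t = Some a" using c(1,2) tot by auto
    then have "d = c" using c(3) upd_del_same by metis
    then show "d \<in> P" using c by simp
  qed
qed

lemma slice_parts:
  assumes P: "P \<in> parts q m I" and tot: "\<forall>c\<in>P. t \<in> dom c" and tI: "t \<in> I" and a: "a < q"
    and fI: "finite I"
  shows "sl t a P \<in> parts q (m - 1) (I - {t})"
proof -
  have cP: "cpart q I P" and dm: "\<forall>c\<in>P. card (dom c) \<le> m" using P unfolding parts_def by auto
  have "\<forall>d\<in>sl t a P. card (dom d) \<le> m - 1"
  proof
    fix d assume "d \<in> sl t a P"
    then obtain c where c: "c \<in> P" "d = c(t:=None)" unfolding sl_def by auto
    have "dom d = dom c - {t}" using c by auto
    moreover have "t \<in> dom c" using tot c by auto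
    moreover have "finite (dom c)" using cpart_vcode[OF cP c(1)] fI unfolding vcode_def by (meson finite_subset)
    moreover have "card (dom c) \<le> m" using dm c by auto
    ultimately show "card (dom d) \<le> m - 1" by (simp add: card_Diff_singleton diff_le_mono)
  qed
  then show ?thesis using slice_cpart[OF cP tI a] unfolding parts_def by auto
qed

lemma tot_count:
  assumes q: "q \<ge> 2" and fI: "finite I"
  shows "card {P \<in> parts q m I. \<exists>t\<in>I. \<forall>c\<in>P. t \<in> dom c}
    \<le> (\<Sum>t\<in>I. card (parts q (m - 1) (I - {t})) ^ q)"
proof -
  define A where "A = {P \<in> parts q m I. \<exists>t\<in>I. \<forall>c\<in>P. t \<in> dom c}"
  define tp where "tp (P::(nat \<Rightarrow> nat option) set) = (SOME t. t \<in> I \<and> (\<forall>c\<in>P. t \<in> dom c))" for P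
  define f where "f (P::(nat \<Rightarrow> nat option) set) = (tp P, restrict (\<lambda>a. sl (tp P) a P) {..<q})" for P
  define T where "T = (SIGMA t:I. {..<q} \<rightarrow>\<^sub>E parts q (m - 1) (I - {t}))"
  have tpP: "\<And>P. P \<in> A \<Longrightarrow> tp P \<in> I \<and> (\<forall>c\<in>P. tp P \<in> dom c)"
    unfolding A_def tp_def by (rule someI_ex) blast
  have inj: "inj_on f A"
  proof (rule inj_onI)
    fix P1 P2 assume P1: "P1 \<in> A" and P2: "P2 \<in> A" and e: "f P1 = f P2"
    have t: "tp P1 = tp P2" using e unfolding f_def by simp
    have s: "\<forall>a<q. sl (tp P1) a P1 = sl (tp P1) a P2"
    proof (intro allI impI)
      fix a assume a: "a < q"
      have "restrict (\<lambda>a. sl (tp P1) a P1) {..<q} = restrict (\<lambda>a. sl (tp P2) a P2) {..<q}"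
        using e unfolding f_def by (metis snd_conv)
      then have "restrict (\<lambda>a. sl (tp P1) a P1) {..<q} a = restrict (\<lambda>a. sl (tp P2) a P2) {..<q} a"
        by simp
      then show "sl (tp P1) a P1 = sl (tp P1) a P2" using a t by (metis restrict_apply' lessThan_iff) 
    qed
    have c1: "cpart q I P1" and c2: "cpart q I P2" using P1 P2 unfolding A_def parts_def by auto
    have "P1 = (\<Union>a<q. (\<lambda>c. c(tp P1 \<mapsto> a)) ` sl (tp P1) a P1)" using recon[OF c1] tpP[OF P1] by blast
    also have "\<dots> = (\<Union>a<q. (\<lambda>c. c(tp P1 \<mapsto> a)) ` sl (tp P1) a P2)" using s by simp
    also have "\<dots> = (\<Union>a<q. (\<lambda>c. c(tp P2 \<mapsto> a)) ` sl (tp P2) a P2)" using t by simp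
    also have "\<dots> = P2" using recon[OF c2, of "tp P2"] tpP[OF P2] by simp
    finally show "P1 = P2" .
  qed
  have img: "f ` A \<subseteq> T"
  proof
    fix y assume "y \<in> f ` A"
    then obtain P where P: "P \<in> A" "y = f P" by auto
    have PP: "P \<in> parts q m I" using P unfolding A_def by auto
    show "y \<in> T" unfolding T_def P(2) f_def
      using tpP[OF P(1)] slice_parts[OF PP _ _ _ fI] by auto
  qed
  have fT: "finite T" unfolding T_def using fI parts_finite
    by (intro finite_SigmaI) (auto intro: finite_PiE)
  have "card A \<le> card T" using card_inj_on_le[OF inj img fT] .
  also have "card T = (\<Sum>t\<in>I. card ({..<q} \<rightarrow>\<^sub>E parts q (m - 1) (I - {t})))"
    unfolding T_def using fI parts_finite by (intro card_SigmaI) (auto intro: finite_PiE)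
  also have "\<dots> = (\<Sum>t\<in>I. card (parts q (m - 1) (I - {t})) ^ q)"
    by (simp add: card_PiE)
  finally show ?thesis unfolding A_def .
qed

lemma subsets_le_card:
  assumes fI: "finite I"
  shows "card {J. J \<subseteq> I \<and> card J \<le> K} \<le> (K + 1) * (card I + 1) ^ K"
proof -
  have e: "{J. J \<subseteq> I \<and> card J \<le> K} = (\<Union>k\<in>{..K}. {J. J \<subseteq> I \<and> card J = k})" by auto
  have "card {J. J \<subseteq> I \<and> card J \<le> K} \<le> (\<Sum>k\<in>{..K}. card {J. J \<subseteq> I \<and> card J = k})"
    unfolding e by (rule card_UN_le) simp
  also have "\<dots> = (\<Sum>k\<in>{..K}. card I choose k)" using n_subsets[OF fI] by simp
  also have "\<dots> \<le> (\<Sum>k\<in>{..K}. (card I + 1) ^ K)"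
  proof (rule sum_mono)
    fix k assume k: "k \<in> {..K}"
    show "card I choose k \<le> (card I + 1) ^ K"
    proof (cases "k \<le> card I")
      case True
      have "card I choose k \<le> card I ^ k" using binomial_le_pow[OF True] .
      also have "\<dots> \<le> (card I + 1) ^ k" by (simp add: power_mono)
      also have "\<dots> \<le> (card I + 1) ^ K" using k by (simp add: power_increasing)
      finally show ?thesis .
    next
      case False then have "card I choose k = 0" by (simp add: binomial_eq_0)
      then show ?thesis by linarith
    qed
  qed
  also have "\<dots> = (K + 1) * (card I + 1) ^ K" by simp
  finally show ?thesis .
qed

lemma low_count:
  assumes fI: "finite I"
  shows "card {P \<in> parts q m I. card (UU P) \<le> K} \<le> (K + 1) * (card I + 1) ^ K * 2 ^ ((q + 1) ^ K)"
proof -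
  define JJ where "JJ = {J. J \<subseteq> I \<and> card J \<le> K}"
  have "JJ \<subseteq> Pow I" unfolding JJ_def by auto
  then have fJJ: "finite JJ" using fI finite_subset by blast
  have sub: "{P \<in> parts q m I. card (UU P) \<le> K} \<subseteq> (\<Union>J\<in>JJ. Pow (vcodes q J))"
  proof
    fix P assume P: "P \<in> {P \<in> parts q m I. card (UU P) \<le> K}"
    then have cP: "cpart q I P" unfolding parts_def by auto
    have UI: "UU P \<subseteq> I" using cpart_vcode[OF cP] unfolding UU_def vcode_def by blast
    have "P \<subseteq> vcodes q (UU P)" using cpart_vcode[OF cP] unfolding vcodes_def vcode_def UU_def by blast
    moreover have "UU P \<in> JJ" unfolding JJ_def using UI P by auto
    ultimately show "P \<in> (\<Union>J\<in>JJ. Pow (vcodes q J))" by auto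
  qed
  have fJ: "\<And>J. J \<in> JJ \<Longrightarrow> finite J" unfolding JJ_def using fI finite_subset by blast
  have "card {P \<in> parts q m I. card (UU P) \<le> K} \<le> card (\<Union>J\<in>JJ. Pow (vcodes q J))"
    using sub fJJ fJ vcodes_finite by (intro card_mono) auto
  also have "\<dots> \<le> (\<Sum>J\<in>JJ. card (Pow (vcodes q J)))" by (rule card_UN_le[OF fJJ])
  also have "\<dots> \<le> (\<Sum>J\<in>JJ. 2 ^ ((q + 1) ^ K))"
  proof (rule sum_mono)
    fix J assume J: "J \<in> JJ"
    have "card (vcodes q J) \<le> (q + 1) ^ card J" using vcodes_card[OF fJ[OF J]] .
    also have "\<dots> \<le> (q + 1) ^ K" using J unfolding JJ_def by (simp add: power_increasing)
    finally have "card (vcodes q J) \<le> (q + 1) ^ K" .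
    then show "card (Pow (vcodes q J)) \<le> 2 ^ ((q + 1) ^ K)"
      using vcodes_finite[OF fJ[OF J]] by (simp add: card_Pow power_increasing)
  qed
  also have "\<dots> = card JJ * 2 ^ ((q + 1) ^ K)" by simp
  also have "\<dots> \<le> (K + 1) * (card I + 1) ^ K * 2 ^ ((q + 1) ^ K)"
    using subsets_le_card[OF fI, of K] unfolding JJ_def by simp
  finally show ?thesis .
qed

lemma parts0: "finite I \<Longrightarrow> q \<ge> 1 \<Longrightarrow> card (parts q 0 I) \<le> 1"
proof -
  assume fI: "finite I" and q1: "q \<ge> 1"
  have "parts q 0 I \<subseteq> {{Map.empty}}"
  proof
    fix P assume P: "P \<in> parts q 0 I"
    have cP: "cpart q I P" and d: "\<forall>c\<in>P. card (dom c) \<le> 0" using P unfolding parts_def by auto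
    have "\<forall>c\<in>P. c = Map.empty"
    proof
      fix c assume c: "c \<in> P"
      have "finite (dom c)" using cpart_vcode[OF cP c] fI unfolding vcode_def by (meson finite_subset)
      moreover have "card (dom c) = 0" using d c by blast
      ultimately have "dom c = {}" by (meson card_0_eq)
      then show "c = Map.empty" by (metis dom_eq_empty_conv)
    qed
    moreover have "P \<noteq> {}" using cpart_ne[OF cP q1] .
    ultimately show "P \<in> {{Map.empty}}" by auto
  qed
  moreover have "card {{Map.empty :: nat \<Rightarrow> nat option}} = 1" by simp
  ultimately show ?thesis using card_mono[of "{{Map.empty :: nat \<Rightarrow> nat option}}" "parts q 0 I"] by simp
qed

lemma UB:
  assumes q: "q \<ge> 2"
  shows "\<exists>C. \<forall>I. finite I \<longrightarrow> card (parts q m I) \<le> (card I + C) ^ Nm q m"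
proof (induction m)
  case 0
  show ?case using parts0 q by (auto simp: Nm_def)
next
  case (Suc m)
  obtain C' where C': "\<forall>J. finite J \<longrightarrow> card (parts q m J) \<le> (card J + C') ^ Nm q m" using Suc by blast
  define K where "K = q * Nm q m"
  define D where "D = (K + 1) * 2 ^ ((q + 1) ^ K)"
  define C where "C = C' + D + 1"
  have NK: "Nm q (Suc m) = K + 1" unfolding K_def Nm_Suc by simp
  have "\<forall>I. finite I \<longrightarrow> card (parts q (Suc m) I) \<le> (card I + C) ^ Nm q (Suc m)"
  proof (intro allI impI)
    fix I :: "nat set" assume fI: "finite I"
    define n where "n = card I"
    define A1 where "A1 = {P \<in> parts q (Suc m) I. \<exists>t\<in>I. \<forall>c\<in>P. t \<in> dom c}"
    define A2 where "A2 = {P \<in> parts q (Suc m) I. card (UU P) \<le> K}"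
    have "parts q (Suc m) I \<subseteq> A1 \<union> A2"
      using split_parts[OF q fI, of "Suc m"] NK unfolding A1_def A2_def by auto
    then have "card (parts q (Suc m) I) \<le> card (A1 \<union> A2)"
      using parts_finite[OF fI] unfolding A1_def A2_def by (intro card_mono) auto
    also have "\<dots> \<le> card A1 + card A2" by (rule card_Un_le)
    also have "card A1 \<le> n * (n + C) ^ K"
    proof -
      have "card A1 \<le> (\<Sum>t\<in>I. card (parts q m (I - {t})) ^ q)"
        using tot_count[OF q fI, of "Suc m"] unfolding A1_def by simp
      also have "\<dots> \<le> (\<Sum>t\<in>I. (n + C) ^ K)"
      proof (rule sum_mono)
        fix t assume t: "t \<in> I"
        have "card (parts q m (I - {t})) \<le> (card (I - {t}) + C') ^ Nm q m" using C' fI by auto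
        also have "\<dots> \<le> (n + C) ^ Nm q m"
          using t fI unfolding n_def C_def by (intro power_mono) (auto simp: card_Diff_singleton)
        finally have "card (parts q m (I - {t})) ^ q \<le> ((n + C) ^ Nm q m) ^ q" by (rule power_mono) simp
        also have "\<dots> = (n + C) ^ K" unfolding K_def by (simp add: power_mult[symmetric] mult.commute)
        finally show "card (parts q m (I - {t})) ^ q \<le> (n + C) ^ K" .
      qed
      also have "\<dots> = n * (n + C) ^ K" unfolding n_def by simp
      finally show ?thesis .
    qed
    also have "card A2 \<le> D * (n + C) ^ K"
    proof -
      have "card A2 \<le> (K + 1) * (n + 1) ^ K * 2 ^ ((q + 1) ^ K)"
        using low_count[OF fI] unfolding A2_def n_def by blast
      also have "\<dots> = D * (n + 1) ^ K" unfolding D_def by (simp only: mult.commute mult.left_commute)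
      also have "\<dots> \<le> D * (n + C) ^ K" unfolding C_def by (intro mult_left_mono power_mono) auto
      finally show ?thesis .
    qed
    also have "n * (n + C) ^ K + D * (n + C) ^ K \<le> (n + C) * (n + C) ^ K"
      unfolding C_def by (simp add: algebra_simps)
    also have "\<dots> = (n + C) ^ Nm q (Suc m)" unfolding NK by simp
    finally show "card (parts q (Suc m) I) \<le> (card I + C) ^ Nm q (Suc m)" unfolding n_def by simp
  qed
  then show ?case by blast
qed



definition perf :: "nat \<Rightarrow> nat \<Rightarrow> nat set \<Rightarrow> (nat \<Rightarrow> nat option) set set" where
  "perf q m I = {P \<in> parts q m I. card (UU P) = Nm q m}"

definition build :: "nat \<Rightarrow> nat \<Rightarrow> (nat \<Rightarrow> nat option) set list \<Rightarrow> (nat \<Rightarrow> nat option) set" where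
  "build q t ps = (\<Union>a<q. (\<lambda>c. c(t \<mapsto> a)) ` (ps ! a))"

definition Lk :: "nat \<Rightarrow> nat \<Rightarrow> nat \<Rightarrow> nat set \<Rightarrow> (nat \<Rightarrow> nat option) set list set" where
  "Lk q m k J = {ps. length ps = k \<and> (\<forall>i<k. ps ! i \<in> perf q m J) \<and>
      (\<forall>i<k. \<forall>j<k. i \<noteq> j \<longrightarrow> UU (ps ! i) \<inter> UU (ps ! j) = {})}"

lemma cpart_lift:
  assumes P: "cpart q J P" and JI: "J \<subseteq> I"
  shows "cpart q I P"
  unfolding cpart_def
proof (intro conjI ballI)
  fix c assume "c \<in> P" then show "vcode q I c" using cpart_vcode[OF P] JI unfolding vcode_def by blast
next
  fix x assume x: "x \<in> hc q I"
  have x': "restrict x J \<in> hc q J" using x JI unfolding hc_def by auto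
  have eq: "\<And>c. c \<in> P \<Longrightarrow> agrees x c = agrees (restrict x J) c"
  proof -
    fix c assume c: "c \<in> P"
    have "dom c \<subseteq> J" using cpart_vcode[OF P c] unfolding vcode_def by auto
    then have "\<forall>i\<in>dom c. restrict x J i = x i" by auto
    then show "agrees x c = agrees (restrict x J) c" unfolding agrees_def by simp
  qed
  show "\<exists>!c\<in>P. agrees x c" using P x' eq unfolding cpart_def by metis
qed

lemma perf_lift: "P \<in> perf q m J \<Longrightarrow> J \<subseteq> I \<Longrightarrow> P \<in> perf q m I"
  unfolding perf_def parts_def using cpart_lift by blast

lemma perf_UU: "P \<in> perf q m J \<Longrightarrow> UU P \<subseteq> J"
  unfolding perf_def parts_def UU_def using cpart_vcode unfolding vcode_def by blast

lemma perf_finite: "finite I \<Longrightarrow> finite (perf q m I)"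
  unfolding perf_def using parts_finite by auto

lemma Lk_finite: "finite J \<Longrightarrow> finite (Lk q m k J)"
proof -
  assume fJ: "finite J"
  have "Lk q m k J \<subseteq> {ps. set ps \<subseteq> perf q m J \<and> length ps = k}"
    unfolding Lk_def by (auto simp: in_set_conv_nth)
  then show ?thesis using finite_lists_length_eq[OF perf_finite[OF fJ]] finite_subset by blast
qed

lemma Lk_count:
  assumes hyp: "\<forall>J. finite J \<longrightarrow> (card J - Nm q m) ^ Nm q m \<le> card (perf q m J)"
  shows "finite J \<Longrightarrow> (card J - k * Nm q m) ^ (k * Nm q m) \<le> card (Lk q m k J)"
proof (induction k arbitrary: J)
  case 0
  have "Lk q m 0 J = {[]}" unfolding Lk_def by auto
  then show ?case by simp
next
  case (Suc k)
  note fJ = Suc.prems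
  define N where "N = Nm q m"
  define S where "S = (SIGMA p:perf q m J. Lk q m k (J - UU p))"
  have sub: "(\<lambda>(p, ps). p # ps) ` S \<subseteq> Lk q m (Suc k) J"
  proof
    fix y assume "y \<in> (\<lambda>(p, ps). p # ps) ` S"
    then obtain p ps where pp: "p \<in> perf q m J" "ps \<in> Lk q m k (J - UU p)" "y = p # ps"
      unfolding S_def by auto
    have len: "length ps = k" and el: "\<forall>i<k. ps ! i \<in> perf q m (J - UU p)"
      and dj: "\<forall>i<k. \<forall>j<k. i \<noteq> j \<longrightarrow> UU (ps ! i) \<inter> UU (ps ! j) = {}"
      using pp(2) unfolding Lk_def by auto
    have el': "\<forall>i<Suc k. (p # ps) ! i \<in> perf q m J"
    proof (intro allI impI)
      fix i assume i: "i < Suc k"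
      show "(p # ps) ! i \<in> perf q m J"
      proof (cases i)
        case 0 then show ?thesis using pp by simp
      next
        case (Suc i') then show ?thesis using el i perf_lift[of _ q m "J - UU p" J] by auto
      qed
    qed
    have dis0: "\<forall>j<k. UU p \<inter> UU (ps ! j) = {}" using el perf_UU by blast
    have dj': "\<forall>i<Suc k. \<forall>j<Suc k. i \<noteq> j \<longrightarrow> UU ((p # ps) ! i) \<inter> UU ((p # ps) ! j) = {}"
    proof (intro allI impI)
      fix i j assume i: "i < Suc k" and j: "j < Suc k" and ij: "i \<noteq> j"
      show "UU ((p # ps) ! i) \<inter> UU ((p # ps) ! j) = {}"
      proof (cases i)
        case 0
        then obtain j' where "j = Suc j'" using ij by (cases j) auto
        then show ?thesis using 0 dis0 j by auto
      next
        case (Suc i')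
        show ?thesis
        proof (cases j)
          case 0 then show ?thesis using Suc dis0 i by auto
        next
          case (Suc j') then show ?thesis using \<open>i = Suc i'\<close> dj i j ij by auto
        qed
      qed
    qed
    show "y \<in> Lk q m (Suc k) J" unfolding Lk_def pp(3) using len el' dj' by simp
  qed
  have inj: "inj_on (\<lambda>(p, ps). p # ps) S" by (rule inj_onI) auto
  have fS: "finite S" unfolding S_def using perf_finite[OF fJ] Lk_finite fJ by auto
  have "card S = (\<Sum>p\<in>perf q m J. card (Lk q m k (J - UU p)))"
    unfolding S_def using perf_finite[OF fJ] Lk_finite fJ by (intro card_SigmaI) auto
  also have "\<dots> \<ge> (\<Sum>p\<in>perf q m J. (card J - Suc k * N) ^ (k * N))"
  proof (rule sum_mono)
    fix p assume p: "p \<in> perf q m J"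
    have cU: "card (UU p) = N" using p unfolding perf_def N_def by auto
    have "card (J - UU p) = card J - N" using perf_UU[OF p] fJ cU by (simp add: card_Diff_subset finite_subset)
    then have "card (J - UU p) - k * N = card J - Suc k * N" by simp
    moreover have "(card (J - UU p) - k * N) ^ (k * N) \<le> card (Lk q m k (J - UU p))"
      using Suc.IH[of "J - UU p"] fJ unfolding N_def by auto
    ultimately show "(card J - Suc k * N) ^ (k * N) \<le> card (Lk q m k (J - UU p))" by simp
  qed
  finally have "card (perf q m J) * (card J - Suc k * N) ^ (k * N) \<le> card S" by simp
  moreover have "(card J - Suc k * N) ^ N \<le> card (perf q m J)"
  proof -
    have "(card J - Suc k * N) ^ N \<le> (card J - N) ^ N" by (intro power_mono) auto
    then show ?thesis using hyp fJ unfolding N_def by (meson le_trans)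
  qed
  ultimately have "(card J - Suc k * N) ^ N * (card J - Suc k * N) ^ (k * N) \<le> card S"
    by (meson le_trans mult_le_mono1)
  then have "(card J - Suc k * N) ^ (Suc k * N) \<le> card S" by (simp add: power_add[symmetric])
  also have "card S = card ((\<lambda>(p, ps). p # ps) ` S)" using card_image[OF inj] by simp
  also have "\<dots> \<le> card (Lk q m (Suc k) J)" using sub Lk_finite[OF fJ] by (rule card_mono[rotated])
  finally show ?case unfolding N_def .
qed

lemma build_props:
  assumes q: "q \<ge> 2" and fI: "finite I" and tI: "t \<in> I" and ps: "ps \<in> Lk q m q (I - {t})"
  shows "cpart q I (build q t ps)"
    and "\<forall>c\<in>build q t ps. card (dom c) \<le> Suc m"
    and "card (UU (build q t ps)) = 1 + q * Nm q m"
    and "\<And>s. \<forall>c\<in>build q t ps. s \<in> dom c \<Longrightarrow> s = t"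
    and "\<forall>a<q. sl t a (build q t ps) = ps ! a"
    and "\<forall>c\<in>build q t ps. t \<in> dom c"
proof -
  have len: "length ps = q" and el: "\<forall>i<q. ps ! i \<in> perf q m (I - {t})"
    and dj: "\<forall>i<q. \<forall>j<q. i \<noteq> j \<longrightarrow> UU (ps ! i) \<inter> UU (ps ! j) = {}"
    using ps unfolding Lk_def by auto
  have cp: "\<And>a. a < q \<Longrightarrow> cpart q (I - {t}) (ps ! a)" using el unfolding perf_def parts_def by auto
  have vc: "\<And>a c. a < q \<Longrightarrow> c \<in> ps ! a \<Longrightarrow> vcode q (I - {t}) c" using cp cpart_vcode by blast
  have tn: "\<And>a c. a < q \<Longrightarrow> c \<in> ps ! a \<Longrightarrow> t \<notin> dom c" using vc unfolding vcode_def by blast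
  have ne: "\<And>a. a < q \<Longrightarrow> ps ! a \<noteq> {}" using cp cpart_ne q by fastforce
  have mem: "\<And>d. d \<in> build q t ps \<longleftrightarrow> (\<exists>a<q. \<exists>c\<in>ps ! a. d = c(t \<mapsto> a))"
    unfolding build_def by auto
  show "\<forall>c\<in>build q t ps. t \<in> dom c" using mem by auto
  show "cpart q I (build q t ps)"
    unfolding cpart_def
  proof (intro conjI ballI)
    fix d assume "d \<in> build q t ps"
    then obtain a c where ac: "a < q" "c \<in> ps ! a" "d = c(t \<mapsto> a)" using mem by blast
    show "vcode q I d" using vc[OF ac(1,2)] ac tI unfolding vcode_def by auto
  next
    fix x assume x: "x \<in> hc q I"
    define a where "a = x t"
    have a: "a < q" using x tI unfolding hc_def a_def by auto
    define x' where "x' = x(t := undefined)"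
    have x': "x' \<in> hc q (I - {t})" using x unfolding hc_def x'_def by (auto simp: PiE_def extensional_def)
    obtain c where c: "c \<in> ps ! a" "agrees x' c" using cpart_ex[OF cp[OF a] x'] by blast
    have ag: "agrees x (c(t \<mapsto> a))" using c(2) tn[OF a c(1)] unfolding agrees_def x'_def a_def
      by (auto split: if_splits)
    show "\<exists>!d\<in>build q t ps. agrees x d"
    proof (rule ex1I[of _ "c(t \<mapsto> a)"])
      show "c(t \<mapsto> a) \<in> build q t ps \<and> agrees x (c(t \<mapsto> a))" using mem a c ag by blast
    next
      fix d assume d: "d \<in> build q t ps \<and> agrees x d"
      then obtain b c' where bc: "b < q" "c' \<in> ps ! b" "d = c'(t \<mapsto> b)" using mem by blast
      have "d t = Some b" using bc by simp
      then have ba: "b = a" using agrees_val[of x d t b] d unfolding a_def by simp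
      have tc': "t \<notin> dom c'" using tn[OF bc(1,2)] .
      have "agrees x' c'" unfolding agrees_def
      proof
        fix i assume i: "i \<in> dom c'"
        then have it: "i \<noteq> t" using tc' by auto
        have "i \<in> dom d" using i bc(3) by auto
        then have "d i = Some (x i)" using d unfolding agrees_def by blast
        then show "c' i = Some (x' i)" using it bc(3) unfolding x'_def by simp
      qed
      then have "c' = c" using cpart_uniq[OF cp[OF a] x' _ c(1) _ c(2)] bc(2) ba by blast
      then show "d = c(t \<mapsto> a)" using bc(3) ba by simp
    qed
  qed
  show "\<forall>c\<in>build q t ps. card (dom c) \<le> Suc m"
  proof
    fix d assume "d \<in> build q t ps"
    then obtain a c where ac: "a < q" "c \<in> ps ! a" "d = c(t \<mapsto> a)" using mem by blast
    have "card (dom c) \<le> m" using el ac unfolding perf_def parts_def by auto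
    moreover have "finite (dom c)" using vc[OF ac(1,2)] fI unfolding vcode_def by (meson finite_Diff finite_subset)
    ultimately show "card (dom d) \<le> Suc m" using ac(3) tn[OF ac(1,2)] by simp
  qed
  have UUb: "UU (build q t ps) = insert t (\<Union>a<q. UU (ps ! a))"
  proof
    show "UU (build q t ps) \<subseteq> insert t (\<Union>a<q. UU (ps ! a))"
      unfolding UU_def build_def by auto
  next
    have q0: "0 < q" using q by simp
    obtain c0 where c0: "c0 \<in> ps ! 0" using ne[OF q0] by blast
    then have "c0(t \<mapsto> 0) \<in> build q t ps" using q0 mem by blast
    moreover have "t \<in> dom (c0(t \<mapsto> 0))" by simp
    ultimately have "t \<in> UU (build q t ps)" unfolding UU_def by blast
    moreover have "(\<Union>a<q. UU (ps ! a)) \<subseteq> UU (build q t ps)"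
    proof
      fix i assume "i \<in> (\<Union>a<q. UU (ps ! a))"
      then obtain a c where "a < q" "c \<in> ps ! a" "i \<in> dom c" unfolding UU_def by auto
      then have "c(t \<mapsto> a) \<in> build q t ps" "i \<in> dom (c(t \<mapsto> a))" using mem by auto
      then show "i \<in> UU (build q t ps)" unfolding UU_def by blast
    qed
    ultimately show "insert t (\<Union>a<q. UU (ps ! a)) \<subseteq> UU (build q t ps)" by blast
  qed
  have fU: "\<And>a. a < q \<Longrightarrow> finite (UU (ps ! a))"
    using perf_UU el fI by (meson finite_Diff finite_subset)
  have tU: "t \<notin> (\<Union>a<q. UU (ps ! a))" using perf_UU el by blast
  have "card (\<Union>a<q. UU (ps ! a)) = (\<Sum>a<q. card (UU (ps ! a)))"
    using fU dj by (intro card_UN_disjoint) auto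
  also have "\<dots> = (\<Sum>a<q. Nm q m)" using el unfolding perf_def by simp
  finally show "card (UU (build q t ps)) = 1 + q * Nm q m"
    unfolding UUb using tU fU by (simp add: card_insert_if)
  show "\<And>s. \<forall>c\<in>build q t ps. s \<in> dom c \<Longrightarrow> s = t"
  proof (rule ccontr)
    fix s assume all: "\<forall>c\<in>build q t ps. s \<in> dom c" and st: "s \<noteq> t"
    have inU: "\<And>a. a < q \<Longrightarrow> s \<in> UU (ps ! a)"
    proof -
      fix a assume a: "a < q"
      obtain c where c: "c \<in> ps ! a" using ne[OF a] by blast
      then have "s \<in> dom (c(t \<mapsto> a))" using all mem a by blast
      then have "s \<in> dom c" using st by auto
      then show "s \<in> UU (ps ! a)" using c unfolding UU_def by auto
    qed
    have "0 < q" "1 < q" using q by auto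
    then show False using inU dj by blast
  qed
  show "\<forall>a<q. sl t a (build q t ps) = ps ! a"
  proof (intro allI impI)
    fix a assume a: "a < q"
    have "{c \<in> build q t ps. c t = None \<or> c t = Some a} = (\<lambda>c. c(t \<mapsto> a)) ` (ps ! a)"
      using mem a by auto
    moreover have "(\<lambda>c. c(t:=None)) ` (\<lambda>c. c(t \<mapsto> a)) ` (ps ! a) = ps ! a"
    proof -
      have "\<And>c. c \<in> ps ! a \<Longrightarrow> (c(t \<mapsto> a))(t:=None) = c"
        using tn[OF a] by (auto simp: domIff fun_upd_idem)
      then show ?thesis by (force simp: image_image)
    qed
    ultimately show "sl t a (build q t ps) = ps ! a" unfolding sl_def by simp
  qed
qed

lemma LB:
  assumes q: "q \<ge> 2"
  shows "\<forall>I. finite I \<longrightarrow> (card I - Nm q m) ^ Nm q m \<le> card (perf q m I)"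
proof (induction m)
  case 0
  show ?case
  proof (intro allI impI)
    fix I :: "nat set" assume fI: "finite I"
    have "cpart q I {Map.empty}" unfolding cpart_def vcode_def agrees_def by auto
    then have "{Map.empty} \<in> perf q 0 I" unfolding perf_def parts_def Nm_def UU_def by auto
    then have "card (perf q 0 I) \<ge> 1" using perf_finite[OF fI]
      by (metis One_nat_def Suc_leI card_gt_0_iff empty_iff)
    then show "(card I - Nm q 0) ^ Nm q 0 \<le> card (perf q 0 I)" by (simp add: Nm_def)
  qed
next
  case (Suc m)
  show ?case
  proof (intro allI impI)
    fix I :: "nat set" assume fI: "finite I"
    define n where "n = card I"
    define N' where "N' = Nm q m"
    define T where "T = (SIGMA t:I. Lk q m q (I - {t}))"
    define bd where "bd = (\<lambda>(t, ps). build q t ps)"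
    have NS: "Nm q (Suc m) = 1 + q * N'" unfolding N'_def Nm_Suc ..
    have sub: "bd ` T \<subseteq> perf q (Suc m) I"
    proof
      fix y assume "y \<in> bd ` T"
      then obtain t ps where tp: "t \<in> I" "ps \<in> Lk q m q (I - {t})" "y = build q t ps"
        unfolding T_def bd_def by auto
      note B = build_props[OF q fI tp(1) tp(2)]
      show "y \<in> perf q (Suc m) I" unfolding perf_def parts_def tp(3) NS N'_def using B by auto
    qed
    have inj: "inj_on bd T"
    proof (rule inj_onI)
      fix x y assume x: "x \<in> T" and y: "y \<in> T" and e: "bd x = bd y"
      obtain t ps where tp: "x = (t, ps)" "t \<in> I" "ps \<in> Lk q m q (I - {t})" using x unfolding T_def by auto
      obtain t' ps' where tp': "y = (t', ps')" "t' \<in> I" "ps' \<in> Lk q m q (I - {t'})" using y unfolding T_def by auto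
      note B = build_props[OF q fI tp(2) tp(3)]
      note B' = build_props[OF q fI tp'(2) tp'(3)]
      have eb: "build q t ps = build q t' ps'" using e tp tp' unfolding bd_def by simp
      have tt: "t' = t" using B(4)[of t'] B'(6) eb by simp
      have "\<forall>a<q. ps ! a = ps' ! a" using B(5) B'(5) eb tt by simp
      moreover have "length ps = q" "length ps' = q" using tp(3) tp'(3) unfolding Lk_def by auto
      ultimately have "ps = ps'" by (simp add: nth_equalityI)
      then show "x = y" using tp tp' tt by simp
    qed
    have fT: "finite T" unfolding T_def using fI Lk_finite by auto
    have "card T = (\<Sum>t\<in>I. card (Lk q m q (I - {t})))"
      unfolding T_def using fI Lk_finite by (intro card_SigmaI) auto
    also have "\<dots> \<ge> (\<Sum>t\<in>I. (n - Nm q (Suc m)) ^ (q * N'))"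
    proof (rule sum_mono)
      fix t assume t: "t \<in> I"
      have "(card (I - {t}) - q * N') ^ (q * N') \<le> card (Lk q m q (I - {t}))"
        using Lk_count[OF Suc.IH, of "I - {t}" q] fI unfolding N'_def by auto
      moreover have "card (I - {t}) - q * N' = n - Nm q (Suc m)"
        using t fI unfolding n_def NS by (simp add: card_Diff_singleton)
      ultimately show "(n - Nm q (Suc m)) ^ (q * N') \<le> card (Lk q m q (I - {t}))" by simp
    qed
    finally have cT: "n * (n - Nm q (Suc m)) ^ (q * N') \<le> card T" unfolding n_def by simp
    have "(n - Nm q (Suc m)) ^ Nm q (Suc m) = (n - Nm q (Suc m)) * (n - Nm q (Suc m)) ^ (q * N')"
      unfolding NS by simp
    also have "\<dots> \<le> n * (n - Nm q (Suc m)) ^ (q * N')" by (intro mult_right_mono) auto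
    also have "\<dots> \<le> card T" by (rule cT)
    also have "card T = card (bd ` T)" using card_image[OF inj] by simp
    also have "\<dots> \<le> card (perf q (Suc m) I)" using sub perf_finite[OF fI] by (rule card_mono[rotated])
    finally show "(card I - Nm q (Suc m)) ^ Nm q (Suc m) \<le> card (perf q (Suc m) I)" unfolding n_def .
  qed
qed



definition cs :: "nat \<Rightarrow> nat set \<Rightarrow> (nat \<Rightarrow> nat option) \<Rightarrow> (nat \<Rightarrow> nat) set" where
  "cs q I c = {x \<in> hc q I. agrees x c}"

definition mkcode :: "nat set \<Rightarrow> (nat \<Rightarrow> nat) \<Rightarrow> (nat \<Rightarrow> nat option)" where
  "mkcode S f = (\<lambda>i. if i \<in> S then Some (f i) else None)"

lemma hcube_hc: "hcube q n = hc q {..<n}" unfolding hcube_def hc_def ..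

lemma mkcode_dom: "dom (mkcode S f) = S" unfolding mkcode_def dom_def by (auto split: if_splits)

lemma subcube_cs: "subcube_fix q n S f = cs q {..<n} (mkcode S f)"
proof -
  have "\<And>x. (\<forall>i\<in>S. x i = f i) \<longleftrightarrow> agrees x (mkcode S f)"
  proof
    fix x assume "\<forall>i\<in>S. x i = f i"
    then show "agrees x (mkcode S f)" unfolding agrees_def mkcode_dom by (simp add: mkcode_def)
  next
    fix x assume a: "agrees x (mkcode S f)"
    show "\<forall>i\<in>S. x i = f i"
    proof
      fix i assume i: "i \<in> S"
      then have "mkcode S f i = Some (x i)" using a unfolding agrees_def mkcode_dom by blast
      then show "x i = f i" using i unfolding mkcode_def by simp
    qed
  qed
  then show ?thesis unfolding subcube_fix_def cs_def hcube_hc by blast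
qed



lemma mkcode_self: "mkcode (dom c) (\<lambda>i. the (c i)) = c"
  unfolding mkcode_def by (rule ext) (auto simp: domIff)

lemma cs_inj:
  assumes q: "q \<ge> 2" and vc: "vcode q I c" and vd: "vcode q I d" and e: "cs q I c = cs q I d"
  shows "c = d"
proof -
  have "d \<subseteq>\<^sub>m c" using L_sub[OF vc vd q] e unfolding cs_def by blast
  moreover have "c \<subseteq>\<^sub>m d" using L_sub[OF vd vc q] e unfolding cs_def by blast
  ultimately show ?thesis by (rule map_le_antisym[rotated])
qed

lemma set_parts_eq:
  assumes q: "q \<ge> 2"
  shows "{P. subcube_partition q n (n - m) P} = (\<lambda>P. cs q {..<n} ` P) ` parts q m {..<n}"
proof
  let ?I = "{..<n}"
  show "{P. subcube_partition q n (n - m) P} \<subseteq> (\<lambda>P. cs q ?I ` P) ` parts q m ?I"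
  proof
    fix Ps assume "Ps \<in> {P. subcube_partition q n (n - m) P}"
    then have sp: "subcube_partition q n (n - m) Ps" by simp
    define P where "P = {c. vcode q ?I c \<and> card (dom c) \<le> m \<and> cs q ?I c \<in> Ps}"
    have img: "cs q ?I ` P = Ps"
    proof
      show "cs q ?I ` P \<subseteq> Ps" unfolding P_def by auto
    next
      show "Ps \<subseteq> cs q ?I ` P"
      proof
        fix C assume C: "C \<in> Ps"
        have "subcube_dim_ge q n (n - m) C" using sp C unfolding subcube_partition_def by blast
        then obtain S f where Sf: "S \<subseteq> ?I" "\<forall>i\<in>S. f i < q" "n - card S \<ge> n - m" "C = subcube_fix q n S f"
          unfolding subcube_dim_ge_def by blast
        have cS: "card S \<le> n" using Sf(1) by (metis card_lessThan card_mono finite_lessThan)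
        have "card S \<le> m" using Sf(3) cS by linarith
        moreover have "vcode q ?I (mkcode S f)" unfolding vcode_def mkcode_dom using Sf
          by (auto simp: mkcode_def)
        moreover have "cs q ?I (mkcode S f) = C" using Sf(4) subcube_cs by simp
        ultimately show "C \<in> cs q ?I ` P" unfolding P_def using C mkcode_dom by (metis (mono_tags, lifting) image_eqI mem_Collect_eq)
      qed
    qed
    have cP: "cpart q ?I P"
      unfolding cpart_def
    proof (intro conjI ballI)
      fix c assume "c \<in> P" then show "vcode q ?I c" unfolding P_def by simp
    next
      fix x assume x: "x \<in> hc q ?I"
      then have "x \<in> hcube q n" using hcube_hc by simp
      then obtain C where C: "C \<in> Ps" "x \<in> C" using sp unfolding subcube_partition_def by blast
      then obtain c where c: "c \<in> P" "C = cs q ?I c" using img by blast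
      show "\<exists>!c\<in>P. agrees x c"
      proof (rule ex1I[of _ c])
        show "c \<in> P \<and> agrees x c" using c C unfolding cs_def by simp
      next
        fix d assume d: "d \<in> P \<and> agrees x d"
        have "cs q ?I d \<in> Ps" using d unfolding P_def by simp
        moreover have "x \<in> cs q ?I d" using d x unfolding cs_def by simp
        moreover have "x \<in> hcube q n" using x hcube_hc by simp
        ultimately have "cs q ?I d = C" using sp C unfolding subcube_partition_def by blast
        then have "cs q ?I d = cs q ?I c" using c by simp
        moreover have "vcode q ?I d" "vcode q ?I c" using d c unfolding P_def by auto
        ultimately show "d = c" using cs_inj[OF q] by blast
      qed
    qed
    have "P \<in> parts q m ?I" unfolding parts_def using cP unfolding P_def by auto
    then show "Ps \<in> (\<lambda>P. cs q ?I ` P) ` parts q m ?I" using img by blast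
  qed
next
  let ?I = "{..<n}"
  show "(\<lambda>P. cs q ?I ` P) ` parts q m ?I \<subseteq> {P. subcube_partition q n (n - m) P}"
  proof
    fix Ps assume "Ps \<in> (\<lambda>P. cs q ?I ` P) ` parts q m ?I"
    then obtain P where P: "P \<in> parts q m ?I" "Ps = cs q ?I ` P" by blast
    have cP: "cpart q ?I P" and dm: "\<forall>c\<in>P. card (dom c) \<le> m" using P unfolding parts_def by auto
    have "\<forall>C\<in>Ps. subcube_dim_ge q n (n - m) C"
    proof
      fix C assume "C \<in> Ps"
      then obtain c where c: "c \<in> P" "C = cs q ?I c" using P by blast
      have vc: "vcode q ?I c" using cpart_vcode[OF cP c(1)] .
      have e1: "C = subcube_fix q n (dom c) (\<lambda>i. the (c i))" using c subcube_cs mkcode_self by simp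
      have e2: "dom c \<subseteq> ?I" "\<forall>i\<in>dom c. the (c i) < q" using vc unfolding vcode_def by auto
      have e3: "n - card (dom c) \<ge> n - m" using dm c by (simp add: diff_le_mono2)
      show "subcube_dim_ge q n (n - m) C" unfolding subcube_dim_ge_def
        by (rule exI[of _ "dom c"], rule exI[of _ "\<lambda>i. the (c i)"]) (use e1 e2 e3 in blast)
    qed
    moreover have "\<forall>x\<in>hcube q n. \<exists>!C\<in>Ps. x \<in> C"
    proof
      fix x assume "x \<in> hcube q n"
      then have x: "x \<in> hc q ?I" using hcube_hc by simp
      obtain c where c: "c \<in> P" "agrees x c" using cpart_ex[OF cP x] by blast
      show "\<exists>!C\<in>Ps. x \<in> C"
      proof (rule ex1I[of _ "cs q ?I c"])
        show "cs q ?I c \<in> Ps \<and> x \<in> cs q ?I c" using P c x unfolding cs_def by auto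
      next
        fix D assume D: "D \<in> Ps \<and> x \<in> D"
        then obtain d where d: "d \<in> P" "D = cs q ?I d" using P by blast
        then have "agrees x d" using D unfolding cs_def by simp
        then have "d = c" using cpart_uniq[OF cP x d(1) c(1)] c by blast
        then show "D = cs q ?I c" using d by simp
      qed
    qed
    ultimately show "Ps \<in> {P. subcube_partition q n (n - m) P}" unfolding subcube_partition_def by simp
  qed
qed

lemma card_eq_parts:
  assumes q: "q \<ge> 2"
  shows "card {P. subcube_partition q n (n - m) P} = card (parts q m {..<n})"
proof -
  have "inj_on (\<lambda>P. cs q {..<n} ` P) (parts q m {..<n})"
  proof (rule inj_onI)
    fix P1 P2 assume P1: "P1 \<in> parts q m {..<n}" and P2: "P2 \<in> parts q m {..<n}"
      and e: "cs q {..<n} ` P1 = cs q {..<n} ` P2"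
    have inj: "inj_on (cs q {..<n}) (vcodes q {..<n})"
      using cs_inj[OF q] unfolding vcodes_def by (intro inj_onI) auto
    have "P1 \<subseteq> vcodes q {..<n}" "P2 \<subseteq> vcodes q {..<n}"
      using P1 P2 cpart_sub_vcodes unfolding parts_def by auto
    then show "P1 = P2" using inj_on_image_eq_iff[OF inj] e by blast
  qed
  then show ?thesis unfolding set_parts_eq[OF q] by (rule card_image)
qed

lemma ratio_lim_minus: "((\<lambda>n::nat. ((real n - real N) / real n) ^ k) \<longlongrightarrow> 1) at_top"
proof -
  have "((\<lambda>n::nat. 1 - real N / real n) \<longlongrightarrow> 1 - 0) at_top"
    by (intro tendsto_diff tendsto_const lim_const_over_n)
  then have "((\<lambda>n::nat. (1 - real N / real n) ^ k) \<longlongrightarrow> 1 ^ k) at_top"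
    by (intro tendsto_power) simp
  moreover have "eventually (\<lambda>n::nat. (1 - real N / real n) ^ k = ((real n - real N) / real n) ^ k) at_top"
    using eventually_gt_at_top[of 0] by eventually_elim (simp add: field_simps)
  ultimately show ?thesis using tendsto_cong[of "\<lambda>n. (1 - real N / real n) ^ k" "\<lambda>n. ((real n - real N) / real n) ^ k" at_top 1] by simp
qed

lemma ratio_lim_plus: "((\<lambda>n::nat. ((real n + real C) / real n) ^ k) \<longlongrightarrow> 1) at_top"
proof -
  have "((\<lambda>n::nat. 1 + real C / real n) \<longlongrightarrow> 1 + 0) at_top"
    by (intro tendsto_add tendsto_const lim_const_over_n)
  then have "((\<lambda>n::nat. (1 + real C / real n) ^ k) \<longlongrightarrow> 1 ^ k) at_top"
    by (intro tendsto_power) simp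
  moreover have "eventually (\<lambda>n::nat. (1 + real C / real n) ^ k = ((real n + real C) / real n) ^ k) at_top"
    using eventually_gt_at_top[of 0] by eventually_elim (simp add: field_simps)
  ultimately show ?thesis using tendsto_cong[of "\<lambda>n. (1 + real C / real n) ^ k" "\<lambda>n. ((real n + real C) / real n) ^ k" at_top 1] by simp
qed

theorem corollary3:
  fixes q m :: nat
  assumes "q \<ge> 2" and "m \<ge> 1"
  shows "(\<lambda>n. real (card {P. subcube_partition q n (n - m) P}))
           \<sim>[at_top] (\<lambda>n. real n powr ((real q ^ m - 1) / (real q - 1)))"
proof -
  have q: "q \<ge> 2" using assms(1) .
  define N where "N = Nm q m"
  define a where "a n = card {P. subcube_partition q n (n - m) P}" for n
  have aeq: "\<And>n. a n = card (parts q m {..<n})" unfolding a_def using card_eq_parts[OF q] by simp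
  obtain C where C: "\<forall>I. finite I \<longrightarrow> card (parts q m I) \<le> (card I + C) ^ N"
    using UB[OF q, of m] unfolding N_def by blast
  have up: "\<And>n. a n \<le> (n + C) ^ N" using C aeq by (metis card_lessThan finite_lessThan)
  have lo: "\<And>n. (n - N) ^ N \<le> a n"
  proof -
    fix n
    have "(n - N) ^ N \<le> card (perf q m {..<n})" using LB[OF q, of m] unfolding N_def by (metis card_lessThan finite_lessThan)
    also have "\<dots> \<le> card (parts q m {..<n})"
      by (rule card_mono) (auto simp: parts_finite perf_def)
    finally show "(n - N) ^ N \<le> a n" using aeq by simp
  qed
  have expo: "(real q ^ m - 1) / (real q - 1) = real N"
  proof -
    have "1 + (q - 1) * N = q ^ m" using Nm_pow[of q m] q unfolding N_def by simp
    then have "real (1 + (q - 1) * N) = real (q ^ m)" by simp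
    then have "1 + (real q - 1) * real N = real q ^ m" using q by (simp add: of_nat_diff)
    moreover have "real q - 1 \<noteq> 0" using q by simp
    ultimately show ?thesis by (simp add: field_simps)
  qed
  have lim: "((\<lambda>n. real (a n) / real n ^ N) \<longlongrightarrow> 1) at_top"
  proof (rule tendsto_sandwich[OF _ _ ratio_lim_minus[of N N] ratio_lim_plus[of C N]])
    show "eventually (\<lambda>n. ((real n - real N) / real n) ^ N \<le> real (a n) / real n ^ N) at_top"
      using eventually_ge_at_top[of "N + 1"]
    proof eventually_elim
      case (elim n)
      have "real ((n - N) ^ N) \<le> real (a n)" using lo by (simp only: of_nat_le_iff)
      then have "(real n - real N) ^ N \<le> real (a n)" using elim by (simp add: of_nat_diff)
      then have "(real n - real N) ^ N / real n ^ N \<le> real (a n) / real n ^ N"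
        using elim by (intro divide_right_mono) auto
      then show ?case by (simp add: power_divide)
    qed
    show "eventually (\<lambda>n. real (a n) / real n ^ N \<le> ((real n + real C) / real n) ^ N) at_top"
      using eventually_ge_at_top[of 1]
    proof eventually_elim
      case (elim n)
      have "real (a n) \<le> real ((n + C) ^ N)" using up by (simp only: of_nat_le_iff)
      then have "real (a n) \<le> (real n + real C) ^ N" by simp
      then have "real (a n) / real n ^ N \<le> (real n + real C) ^ N / real n ^ N"
        using elim by (intro divide_right_mono) auto
      then show ?case by (simp add: power_divide)
    qed
  qed
  have "((\<lambda>n. real (a n) / real n powr ((real q ^ m - 1) / (real q - 1))) \<longlongrightarrow> 1) at_top"
  proof -
    have "eventually (\<lambda>n. real (a n) / real n ^ N = real (a n) / real n powr ((real q ^ m - 1) / (real q - 1))) at_top"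
      using eventually_gt_at_top[of 0] by eventually_elim (simp add: expo powr_realpow)
    then show ?thesis using lim tendsto_cong[of "\<lambda>n. real (a n) / real n ^ N" "\<lambda>n. real (a n) / real n powr ((real q ^ m - 1) / (real q - 1))" at_top 1] by simp
  qed
  then show ?thesis unfolding a_def by (rule asymp_equivI')
qed


end
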